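(* Let $u$ be a word and $x,y,z$ letters with $x<y\le z$ such that $uyxz\in W(R)$. Then $\chi_R^3(uyxz)\sim_K\chi_R^3(uyzx)$.
   Context: $\sim_K$ is Knuth equivalence; $w|_B$ is the subword of letters in $B$; for a tableau $T$ (English notation), $\mathrm{word}(T)=\dotsb u^2u^1$ with $u^i$ the $i$-th row read left to right. $R=(R_1,\dots,R_t)$ is a sequence of rectangular partitions, $R_i$ with $\eta_i$ rows and $\mu_i$ columns; $n=\sum\eta_i$; $A_i=\{\eta_1+\dots+\eta_{i-1}+1,\dots,\eta_1+\dots+\eta_i\}$; $Y_i$ is the column-strict tableau of shape $R_i$ whose $j$-th row consists of $\mu_i$ copies of $\eta_1+\dots+\eta_{i-1}+j$. $W(R)$ is the set of words $w$ in $[n]$ with $w|_{A_i}\sim_K\mathrm{word}(Y_i)$ for all $i$. For $1\le r\le n-1$ and a word $v$, regard letters $r$ as right and $r+1$ as left parentheses, match them, leaving an unmatched subword $r^c(r+1)^d$; $s_rv$ replaces it (in the same positions) by $r^d(r+1)^c$. These satisfy the Coxeter relations of $S_n$, giving an action of $S_n$ on words. $w_0^R$ is the longest element of the Young subgroup of $S_n$ stabilizing each $A_i$; for a word $w=vx$ with $x$ a letter, $\chi_R(w)=(w_0^Rx)(w_0^Rv)$. *)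

theory Defs
  imports Main
begin

(* Words are lists of positive naturals (letters). *)

inductive knuth_step :: "nat list \<Rightarrow> nat list \<Rightarrow> bool" where
  K1: "x < y \<Longrightarrow> y \<le> z \<Longrightarrow> knuth_step (u @ [y, x, z] @ v) (u @ [y, z, x] @ v)"
| K2: "x \<le> y \<Longrightarrow> y < z \<Longrightarrow> knuth_step (u @ [x, z, y] @ v) (u @ [z, x, y] @ v)"

definition knuth_equiv :: "nat list \<Rightarrow> nat list \<Rightarrow> bool" (infix "\<sim>\<^sub>K" 50) where
  "knuth_equiv = equivclp knuth_step"

definition restrict_word :: "nat list \<Rightarrow> nat set \<Rightarrow> nat list" where
  "restrict_word w B = filter (\<lambda>a. a \<in> B) w"

(* R is a list of rectangles (eta_i, mu_i): eta_i rows, mu_i columns *)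
definition rect_rows :: "(nat \<times> nat) list \<Rightarrow> nat \<Rightarrow> nat" where
  "rect_rows R i = fst (R ! i)"

definition rect_cols :: "(nat \<times> nat) list \<Rightarrow> nat \<Rightarrow> nat" where
  "rect_cols R i = snd (R ! i)"

(* eta_1 + ... + eta_{i} for 0-based index i  (sum over blocks before block i) *)
definition offset :: "(nat \<times> nat) list \<Rightarrow> nat \<Rightarrow> nat" where
  "offset R i = (\<Sum>j<i. rect_rows R j)"

definition total_n :: "(nat \<times> nat) list \<Rightarrow> nat" where
  "total_n R = (\<Sum>j<length R. rect_rows R j)"

(* A_i (0-based block index i) *)
definition block :: "(nat \<times> nat) list \<Rightarrow> nat \<Rightarrow> nat set" where
  "block R i = {offset R i + 1 .. offset R i + rect_rows R i}"

(* word(Y_i) = u^{eta} ... u^2 u^1, row j consisting of mu_i copies of offset + j *)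
definition wordY :: "(nat \<times> nat) list \<Rightarrow> nat \<Rightarrow> nat list" where
  "wordY R i = concat (map (\<lambda>j. replicate (rect_cols R i) (offset R i + j))
                          (rev [1..<rect_rows R i + 1]))"

definition WR :: "(nat \<times> nat) list \<Rightarrow> nat list set" where
  "WR R = {w. set w \<subseteq> {1..total_n R} \<and>
              (\<forall>i<length R. restrict_word w (block R i) \<sim>\<^sub>K wordY R i)}"

(* Bracketing for s_r: letters r are right parentheses, r+1 left parentheses.
   brk r w i opens rs scans w (current position i), keeping a stack 'opens' of positions of
   as yet unmatched letters r+1 and the list 'rs' of positions of unmatched letters r.
   Result: (positions of unmatched r, positions of unmatched r+1), both increasing. *)
fun brk :: "nat \<Rightarrow> nat list \<Rightarrow> nat \<Rightarrow> nat list \<Rightarrow> nat list \<Rightarrow> nat list \<times> nat list" where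
  "brk r [] i opens rs = (rs, rev opens)"
| "brk r (a # w) i opens rs =
     (if a = r + 1 then brk r w (Suc i) (i # opens) rs
      else if a = r then
        (case opens of [] \<Rightarrow> brk r w (Suc i) [] (rs @ [i])
                     | _ # os \<Rightarrow> brk r w (Suc i) os rs)
      else brk r w (Suc i) opens rs)"

(* s_r v: the unmatched subword r^c (r+1)^d is replaced, in the same positions, by r^d (r+1)^c *)
definition s_op :: "nat \<Rightarrow> nat list \<Rightarrow> nat list" where
  "s_op r v = (let (rs, ls) = brk r v 0 [] [];
                   U = rs @ ls; d = length ls
               in map (\<lambda>p. if p \<in> set U
                            then (if length (filter (\<lambda>q. q < p) U) < d then r else Suc r)
                            else v ! p) [0..<length v])"

(* action of s_{r_1} s_{r_2} ... s_{r_k} (given as the list [r_1,...,r_k]) on a word *)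
definition act :: "nat list \<Rightarrow> nat list \<Rightarrow> nat list" where
  "act rs v = foldr s_op rs v"

(* a reduced word for w_0^R: product over blocks of the longest element of S_{A_i},
   written as (s_{a+1})(s_{a+2} s_{a+1}) ... (s_{a+m-1} ... s_{a+1}), a = offset, m = eta_i *)
definition w0R_word :: "(nat \<times> nat) list \<Rightarrow> nat list" where
  "w0R_word R = concat (map (\<lambda>i. concat (map (\<lambda>k. rev [offset R i + 1 ..< offset R i + k + 1])
                                                  [1..<rect_rows R i]))
                            [0..<length R])"

fun chi :: "(nat \<times> nat) list \<Rightarrow> nat list \<Rightarrow> nat list" where
  "chi R [] = []"
| "chi R w = act (w0R_word R) [last w] @ act (w0R_word R) (butlast w)"

end

theory Submission
  imports Defs
begin

definition dl :: "nat \<Rightarrow> nat \<Rightarrow> int" where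
  "dl r a = (if a = Suc r then 1 else if a = r then -1 else 0)"

definition hw :: "nat \<Rightarrow> nat list \<Rightarrow> int" where
  "hw r v = sum_list (map (dl r) v)"

definition nn :: "nat \<Rightarrow> nat list \<Rightarrow> bool" where
  "nn r v = (\<forall>j\<le>length v. hw r (take j v) \<ge> 0)"

lemma hw_simps[simp]: "hw r [] = 0" "hw r (a # v) = dl r a + hw r v"
  "hw r (v @ w) = hw r v + hw r w"
  by (auto simp: hw_def)

lemma brk_append:
  "brk r (v @ w) i os rs = (case brk r v i os rs of (rs', ls') \<Rightarrow> brk r w (i + length v) (rev ls') rs')"
  by (induction v arbitrary: i os rs) (auto split: list.splits)

definition UU :: "nat \<Rightarrow> nat list \<Rightarrow> nat list \<times> nat list" where
  "UU r v = brk r v 0 [] []"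

lemma UU_snoc: "UU r (v @ [a]) =
   (if a = Suc r then (fst (UU r v), snd (UU r v) @ [length v])
    else if a = r then (if snd (UU r v) = [] then (fst (UU r v) @ [length v], [])
                        else (fst (UU r v), butlast (snd (UU r v))))
    else UU r v)"
  unfolding UU_def brk_append
  by (cases "brk r v 0 [] []") (auto split: list.splits simp: butlast_rev[symmetric] rev_swap)

lemma take_snoc_le: "j \<le> length v \<Longrightarrow> take j (v @ [a]) = take j v" by simp

lemma nn_snoc: "nn r (v @ [a]) \<longleftrightarrow> nn r v \<and> hw r v + dl r a \<ge> 0"
proof
  assume h: "nn r (v @ [a])"
  have "nn r v" unfolding nn_def
  proof (intro allI impI)
    fix j assume "j \<le> length v"
    then show "hw r (take j v) \<ge> 0" using h[unfolded nn_def, rule_format, of j] by simp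
  qed
  moreover have "hw r v + dl r a \<ge> 0" using h[unfolded nn_def, rule_format, of "Suc (length v)"] by simp
  ultimately show "nn r v \<and> hw r v + dl r a \<ge> 0" by simp
next
  assume h: "nn r v \<and> hw r v + dl r a \<ge> 0"
  show "nn r (v @ [a])" unfolding nn_def
  proof (intro allI impI)
    fix j assume j: "j \<le> length (v @ [a])"
    show "hw r (take j (v @ [a])) \<ge> 0"
    proof (cases "j \<le> length v")
      case True then show ?thesis using h unfolding nn_def by simp
    next
      case False then have "j = Suc (length v)" using j by simp
      then show ?thesis using h by simp
    qed
  qed
qed

lemma nn_Nil[simp]: "nn r []" by (simp add: nn_def)

definition Pk :: "nat \<Rightarrow> nat list \<Rightarrow> nat \<Rightarrow> nat \<Rightarrow> bool" where
  "Pk r v k p = (p < length v \<and> hw r (take p v) = int k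
       \<and> (\<forall>i. p < i \<and> i \<le> length v \<longrightarrow> hw r (take i v) > int k))"

lemma Pk_snoc:
  assumes "Pk r v k p" "hw r v + dl r a > int k"
  shows "Pk r (v @ [a]) k p"
  unfolding Pk_def
proof (intro conjI allI impI)
  show "p < length (v @ [a])" using assms(1) by (simp add: Pk_def)
  show "hw r (take p (v @ [a])) = int k" using assms(1) by (simp add: Pk_def)
  fix i assume i: "p < i \<and> i \<le> length (v @ [a])"
  show "hw r (take i (v @ [a])) > int k"
  proof (cases "i \<le> length v")
    case True then show ?thesis using assms(1) i by (simp add: Pk_def)
  next
    case False then have "i = Suc (length v)" using i by simp
    then show ?thesis using assms(2) by simp
  qed
qed

lemma UU_char:
  assumes "nn r v"
  shows "fst (UU r v) = [] \<and> length (snd (UU r v)) = nat (hw r v) \<and>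
    (\<forall>k < length (snd (UU r v)). Pk r v k (snd (UU r v) ! k))"
  using assms
proof (induction v rule: rev_induct)
  case Nil
  then show ?case by (simp add: UU_def)
next
  case (snoc a v)
  from snoc.prems have nv: "nn r v" and ha: "hw r v + dl r a \<ge> 0" by (auto simp: nn_snoc)
  note IH = snoc.IH[OF nv]
  have hv0: "hw r v \<ge> 0" using nv unfolding nn_def by (metis order_refl take_all)
  define S where "S = snd (UU r v)"
  have IH1: "fst (UU r v) = []" and IH2: "length S = nat (hw r v)"
    and IH3: "\<And>k. k < length S \<Longrightarrow> Pk r v k (S ! k)" using IH by (auto simp: S_def)
  show ?case
  proof (cases "a = Suc r")
    case True
    then have dla: "dl r a = 1" by (simp add: dl_def)
    have U: "UU r (v @ [a]) = (fst (UU r v), S @ [length v])" using True by (simp add: UU_snoc S_def)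
    have "Pk r (v @ [a]) k ((S @ [length v]) ! k)" if k: "k < length S + 1" for k
    proof (cases "k < length S")
      case True
      then have "(S @ [length v]) ! k = S ! k" by (simp add: nth_append)
      moreover have "hw r v + dl r a > int k" using True IH2 dla hv0 by linarith
      ultimately show ?thesis using Pk_snoc IH3 True by simp
    next
      case False
      then have kk: "k = length S" using k by simp
      then have e: "(S @ [length v]) ! k = length v" by simp
      show ?thesis unfolding e Pk_def using kk IH2 hv0 dla
        by (auto simp: le_Suc_eq)
    qed
    then show ?thesis unfolding U using IH1 IH2 dla hv0 by (simp add: nat_add_distrib)
  next
    case False
    show ?thesis
    proof (cases "a = r")
      case True
      then have dla: "dl r a = -1" by (simp add: dl_def)
      then have Sne: "S \<noteq> []" using IH2 ha by auto
      have U: "UU r (v @ [a]) = (fst (UU r v), butlast S)" using True Sne \<open>a \<noteq> Suc r\<close>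
        by (simp add: UU_snoc S_def)
      have "Pk r (v @ [a]) k (butlast S ! k)" if k: "k < length S - 1" for k
      proof -
        have "butlast S ! k = S ! k" using k by (simp add: nth_butlast)
        moreover have "hw r v + dl r a > int k" using k IH2 dla hv0 by linarith
        ultimately show ?thesis using Pk_snoc IH3 k by simp
      qed
      then show ?thesis unfolding U using IH1 IH2 dla hv0 by (simp add: nat_diff_distrib)
    next
      case False
      then have dla: "dl r a = 0" using \<open>a \<noteq> Suc r\<close> by (simp add: dl_def)
      have U: "UU r (v @ [a]) = UU r v" using False \<open>a \<noteq> Suc r\<close> by (simp add: UU_snoc)
      have "Pk r (v @ [a]) k (S ! k)" if k: "k < length S" for k
      proof -
        have "hw r v + dl r a > int k" using k IH2 dla hv0 by linarith
        then show ?thesis using Pk_snoc IH3 k by simp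
      qed
      then show ?thesis unfolding U using IH1 IH2 dla hv0 by (simp add: S_def)
    qed
  qed
qed

lemma s_op_bal:
  assumes "nn r v" "hw r v = 0"
  shows "s_op r v = v"
proof -
  have "UU r v = ([], [])" using UU_char[OF assms(1)] assms(2) by (cases "UU r v") auto
  then have "brk r v 0 [] [] = ([], [])" by (simp add: UU_def)
  then show ?thesis unfolding s_op_def by (simp add: map_nth)
qed

definition lz :: "nat \<Rightarrow> nat list \<Rightarrow> nat" where
  "lz r v = snd (UU r v) ! 0"

lemma s_op_step:
  assumes "nn r v" "hw r v = 1"
  shows "Pk r v 0 (lz r v) \<and> s_op r v = v[lz r v := r]"
proof -
  obtain p where U: "UU r v = ([], [p])" using UU_char[OF assms(1)] assms(2)
    by (cases "UU r v") (auto simp: length_Suc_conv)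
  then have pk: "Pk r v 0 p" using UU_char[OF assms(1)] by auto
  then have plt: "p < length v" by (simp add: Pk_def)
  have lzp: "lz r v = p" using U by (simp add: lz_def)
  have "brk r v 0 [] [] = ([], [p])" using U by (simp add: UU_def)
  then have "s_op r v = map (\<lambda>q. if q = p then r else v ! q) [0..<length v]"
    unfolding s_op_def by simp
  also have "\<dots> = v[p := r]" by (rule nth_equalityI) (auto simp: nth_list_update)
  finally show ?thesis using pk lzp by simp
qed

lemma Pk_unique: "Pk r v k p \<Longrightarrow> Pk r v k p' \<Longrightarrow> p = p'"
  unfolding Pk_def by (metis linorder_neqE_nat less_imp_le order_less_irrefl)

lemma hw_take_Suc: "p < length v \<Longrightarrow> hw r (take (Suc p) v) = hw r (take p v) + dl r (v ! p)"
  by (simp add: take_Suc_conv_app_nth)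

lemma Pk_letter: "Pk r v k p \<Longrightarrow> v ! p = Suc r"
proof -
  assume h: "Pk r v k p"
  then have "p < length v" by (simp add: Pk_def)
  with h have "hw r (take (Suc p) v) > int k" "hw r (take p v) = int k" by (auto simp: Pk_def)
  then have "dl r (v ! p) > 0" using hw_take_Suc[OF \<open>p < length v\<close>] by simp
  then show ?thesis by (simp add: dl_def split: if_splits)
qed

lemma sum_list_upd_ab: "k < length xs \<Longrightarrow> sum_list (xs[k := (x::'a::ab_group_add)]) = sum_list xs + x - xs ! k"
  by (induction xs arbitrary: k) (auto split: nat.splits simp: algebra_simps)

lemma hw_upd:
  assumes "p < length v"
  shows "hw r (take i (v[p := c])) = hw r (take i v) + (if p < i then dl r c - dl r (v ! p) else 0)"
proof (cases "p < i")
  case True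
  have "take i (v[p := c]) = (take i v)[p := c]" by (simp add: take_update_swap)
  then have "hw r (take i (v[p := c])) = sum_list ((map (dl r) (take i v))[p := dl r c])"
    by (simp add: hw_def map_update)
  also have "\<dots> = sum_list (map (dl r) (take i v)) + dl r c - (map (dl r) (take i v)) ! p"
    using True assms by (simp add: sum_list_upd_ab)
  also have "\<dots> = hw r (take i v) + (dl r c - dl r (v ! p))"
    using True assms by (simp add: hw_def)
  finally show ?thesis using True by simp
next
  case False
  then have "take i (v[p := c]) = take i v" by (simp add: take_update_cancel)
  then show ?thesis using False by simp
qed

fun chn :: "nat \<Rightarrow> nat list \<Rightarrow> nat \<Rightarrow> nat list" where
  "chn ofs X 0 = X"
| "chn ofs X (Suc k) = s_op (ofs + Suc k) (chn ofs X k)"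

definition pp :: "nat \<Rightarrow> nat list \<Rightarrow> nat \<Rightarrow> nat" where
  "pp ofs X l = lz (ofs + l) (chn ofs X (l - 1))"

definition corr :: "(nat \<Rightarrow> nat) \<Rightarrow> nat \<Rightarrow> nat \<Rightarrow> nat \<Rightarrow> int" where
  "corr p k j i = (if j \<le> k \<and> p j < i then -2 else 0)
     + (if Suc j \<le> k \<and> p (Suc j) < i then 1 else 0)
     + (if 2 \<le> j \<and> j \<le> Suc k \<and> p (j - 1) < i then 1 else 0)"

lemma corr0[simp]: "1 \<le> j \<Longrightarrow> corr p 0 j i = 0"
  by (simp add: corr_def)

lemma corr_Suc:
  assumes "1 \<le> j"
  shows "corr p (Suc k) j i = corr p k j i +
     (if p (Suc k) < i then dl (ofs + j) (ofs + Suc k) - dl (ofs + j) (Suc (ofs + Suc k)) else 0)"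
proof -
  consider "j = Suc k" | "j = k" | "j = Suc (Suc k)" | "j \<noteq> Suc k \<and> j \<noteq> k \<and> j \<noteq> Suc (Suc k)" by blast
  then show ?thesis
  proof cases
    case 1 then show ?thesis using assms by (auto simp: corr_def dl_def)
  next
    case 2 then show ?thesis using assms by (auto simp: corr_def dl_def)
  next
    case 3 then show ?thesis using assms by (auto simp: corr_def dl_def)
  next
    case 4 then show ?thesis using assms
      by (auto simp: corr_def dl_def not_less_eq_eq le_Suc_eq)
  qed
qed

lemma nn_final: "nn r v \<Longrightarrow> hw r v \<ge> 0"
  unfolding nn_def by (metis order_refl take_all)

locale chainX =
  fixes ofs eta :: nat and X :: "nat list"
  assumes pre1: "2 \<le> eta \<Longrightarrow> nn (Suc ofs) X \<and> hw (Suc ofs) X = 1"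
    and pre2: "\<And>j. 2 \<le> j \<Longrightarrow> j < eta \<Longrightarrow> nn (ofs + j) X \<and> hw (ofs + j) X = 0"
begin

abbreviation "C \<equiv> chn ofs X"
abbreviation "p \<equiv> pp ofs X"

definition INV :: "nat \<Rightarrow> bool" where
  "INV k = (length (C k) = length X \<and>
   (\<forall>j i. 1 \<le> j \<longrightarrow> j < eta \<longrightarrow> hw (ofs+j) (take i (C k)) = hw (ofs+j) (take i X) + corr p k j i) \<and>
   (\<forall>l. 1 \<le> l \<longrightarrow> l \<le> k \<longrightarrow> Pk (ofs + l) (C (l-1)) 0 (p l) \<and> p l < length X \<and>
        X ! p l = Suc (ofs + l) \<and> C l = (C (l - 1))[p l := ofs + l]) \<and>
   (\<forall>l l'. 1 \<le> l \<longrightarrow> l < l' \<longrightarrow> l' \<le> k \<longrightarrow> p l' < p l) \<and>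
   (\<forall>q < length X. (\<forall>l. 1 \<le> l \<longrightarrow> l \<le> k \<longrightarrow> q \<noteq> p l) \<longrightarrow> C k ! q = X ! q) \<and>
   (\<forall>l. 1 \<le> l \<longrightarrow> l \<le> k \<longrightarrow> C k ! p l = ofs + l))"

lemma INV0: "INV 0"
  unfolding INV_def by simp

lemma INV_Suc:
  assumes IH: "INV k" and kl: "Suc k < eta"
  shows "INV (Suc k)"
proof -
  define r where "r = ofs + Suc k"
  have len: "length (C k) = length X" using IH by (simp add: INV_def)
  have walk: "\<And>j i. 1 \<le> j \<Longrightarrow> j < eta \<Longrightarrow> hw (ofs+j) (take i (C k)) = hw (ofs+j) (take i X) + corr p k j i"
    using IH by (simp add: INV_def)
  have PL: "\<And>l. 1 \<le> l \<Longrightarrow> l \<le> k \<Longrightarrow> Pk (ofs + l) (C (l-1)) 0 (p l) \<and> p l < length X \<and>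
        X ! p l = Suc (ofs + l) \<and> C l = (C (l - 1))[p l := ofs + l]"
    using IH by (simp add: INV_def)
  have mono: "\<And>l l'. 1 \<le> l \<Longrightarrow> l < l' \<Longrightarrow> l' \<le> k \<Longrightarrow> p l' < p l"
    using IH by (simp add: INV_def)
  have nth1: "\<And>q. q < length X \<Longrightarrow> (\<forall>l. 1 \<le> l \<longrightarrow> l \<le> k \<longrightarrow> q \<noteq> p l) \<Longrightarrow> C k ! q = X ! q"
    using IH by (simp add: INV_def)
  have nth2: "\<And>l. 1 \<le> l \<Longrightarrow> l \<le> k \<Longrightarrow> C k ! p l = ofs + l"
    using IH unfolding INV_def by blast
  have wk: "hw r (take i (C k)) = hw r (take i X) + (if 1 \<le> k \<and> p k < i then 1 else 0)" for i
    using walk[of "Suc k" i] kl unfolding r_def by (simp add: corr_def)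
  have Xr: "nn r X \<and> hw r X = (if k = 0 then 1 else 0)"
  proof (cases k)
    case 0 then show ?thesis using pre1 kl unfolding r_def by simp
  next
    case (Suc k') then show ?thesis using pre2[of "Suc k"] kl unfolding r_def by simp
  qed
  have pk_lt: "1 \<le> k \<Longrightarrow> p k < length X" using PL[of k] by simp
  have nnC: "nn r (C k)" unfolding nn_def
  proof (intro allI impI)
    fix i assume "i \<le> length (C k)"
    then have "hw r (take i X) \<ge> 0" using Xr len unfolding nn_def by simp
    then show "hw r (take i (C k)) \<ge> 0" using wk[of i] by simp
  qed
  have hwC: "hw r (C k) = 1"
  proof -
    have "hw r (C k) = hw r (take (length X) (C k))" using len by simp
    also have "\<dots> = hw r X + (if 1 \<le> k \<and> p k < length X then 1 else 0)" using wk by simp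
    finally show ?thesis using Xr pk_lt by auto
  qed
  define q where "q = p (Suc k)"
  have qdef: "q = lz r (C k)" unfolding q_def pp_def r_def by simp
  from s_op_step[OF nnC hwC] have Pq: "Pk r (C k) 0 q" and CS: "C (Suc k) = (C k)[q := r]"
    unfolding qdef by (auto simp: r_def)
  have qlt: "q < length X" using Pq len by (simp add: Pk_def)
  have Ckq: "C k ! q = Suc r" using Pk_letter[OF Pq] .
  have qpk: "q < p k" if k1: "1 \<le> k"
  proof -
    have "\<not> p k < q"
    proof
      assume a: "p k < q"
      have "hw r (take q (C k)) = 0" using Pq by (simp add: Pk_def)
      moreover have "hw r (take q X) \<ge> 0" using Xr qlt unfolding nn_def by simp
      ultimately show False using wk[of q] a k1 by simp
    qed
    moreover have "q \<noteq> p k" using nth2[of k] k1 Ckq unfolding r_def by auto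
    ultimately show ?thesis by simp
  qed
  have qpl: "q < p l" if "1 \<le> l" "l \<le> k" for l
  proof (cases "l = k")
    case True then show ?thesis using qpk that by simp
  next
    case False then show ?thesis using mono[of l k] qpk that by force
  qed
  have Xq: "X ! q = Suc r"
    using nth1[OF qlt] qpl Ckq by force
  have A1: "length (C (Suc k)) = length X" using CS len by simp
  have A2: "\<forall>j i. 1 \<le> j \<longrightarrow> j < eta \<longrightarrow> hw (ofs+j) (take i (C (Suc k))) = hw (ofs+j) (take i X) + corr p (Suc k) j i"
  proof (intro allI impI)
    fix j i assume j1: "1 \<le> j" and je: "j < eta"
    have "hw (ofs+j) (take i (C (Suc k))) = hw (ofs+j) (take i (C k)) +
       (if q < i then dl (ofs+j) r - dl (ofs + j) (C k ! q) else 0)"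
      unfolding CS using hw_upd[of q "C k"] qlt len by simp
    also have "\<dots> = hw (ofs+j) (take i X) + corr p (Suc k) j i"
      unfolding walk[OF j1 je] corr_Suc[OF j1, where ofs=ofs] Ckq using q_def r_def by simp
    finally show "hw (ofs+j) (take i (C (Suc k))) = hw (ofs+j) (take i X) + corr p (Suc k) j i" .
  qed
  have A3: "\<forall>l. 1 \<le> l \<longrightarrow> l \<le> Suc k \<longrightarrow> Pk (ofs + l) (C (l-1)) 0 (p l) \<and> p l < length X \<and>
        X ! p l = Suc (ofs + l) \<and> C l = (C (l - 1))[p l := ofs + l]"
  proof (intro allI impI)
    fix l assume "1 \<le> l" "l \<le> Suc k"
    then show "Pk (ofs + l) (C (l-1)) 0 (p l) \<and> p l < length X \<and>
        X ! p l = Suc (ofs + l) \<and> C l = (C (l - 1))[p l := ofs + l]"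
      using PL[of l] Pq qlt Xq CS unfolding q_def r_def
      by (cases "l = Suc k") auto
  qed
  have A4: "\<forall>l l'. 1 \<le> l \<longrightarrow> l < l' \<longrightarrow> l' \<le> Suc k \<longrightarrow> p l' < p l"
  proof (intro allI impI)
    fix l l' assume "1 \<le> l" "l < l'" "l' \<le> Suc k"
    then show "p l' < p l" using mono[of l l'] qpl[of l] unfolding q_def
      by (cases "l' = Suc k") auto
  qed
  have A5: "\<forall>q' < length X. (\<forall>l. 1 \<le> l \<longrightarrow> l \<le> Suc k \<longrightarrow> q' \<noteq> p l) \<longrightarrow> C (Suc k) ! q' = X ! q'"
  proof (intro allI impI)
    fix q' assume q'l: "q' < length X" and nq: "\<forall>l. 1 \<le> l \<longrightarrow> l \<le> Suc k \<longrightarrow> q' \<noteq> p l"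
    then have "q' \<noteq> q" unfolding q_def by auto
    then have "C (Suc k) ! q' = C k ! q'" unfolding CS by simp
    also have "\<dots> = X ! q'" using nth1[OF q'l] nq by auto
    finally show "C (Suc k) ! q' = X ! q'" .
  qed
  have A6: "\<forall>l. 1 \<le> l \<longrightarrow> l \<le> Suc k \<longrightarrow> C (Suc k) ! p l = ofs + l"
  proof (intro allI impI)
    fix l assume l1: "1 \<le> l" and l2: "l \<le> Suc k"
    show "C (Suc k) ! p l = ofs + l"
    proof (cases "l = Suc k")
      case True then show ?thesis unfolding CS using qlt len unfolding q_def r_def by simp
    next
      case False
      then have "l \<le> k" using l2 by simp
      then have "p l \<noteq> q" using qpl[OF l1] by force
      then show ?thesis unfolding CS using nth2[OF l1 \<open>l \<le> k\<close>] by simp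
    qed
  qed
  show ?thesis unfolding INV_def using A1 A2 A3 A4 A5 A6 by blast
qed

lemma INV_all: "k < eta \<Longrightarrow> INV k"
  by (induction k) (auto intro: INV0 INV_Suc)

end

lemma hw_take_Cons: "hw r (take i (a # v)) = (if i = 0 then 0 else dl r a + hw r (take (i - 1) v))"
  by (cases i) auto

context chainX
begin

lemma INV_walk: "k < eta \<Longrightarrow> 1 \<le> j \<Longrightarrow> j < eta \<Longrightarrow>
   hw (ofs+j) (take i (C k)) = hw (ofs+j) (take i X) + corr p k j i"
  using INV_all[of k] unfolding INV_def by blast

lemma INV_len: "k < eta \<Longrightarrow> length (C k) = length X"
  using INV_all[of k] unfolding INV_def by blast

lemma INV_P: "k < eta \<Longrightarrow> 1 \<le> l \<Longrightarrow> l \<le> k \<Longrightarrow> Pk (ofs + l) (C (l-1)) 0 (p l) \<and> p l < length X \<and>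
        X ! p l = Suc (ofs + l) \<and> C l = (C (l - 1))[p l := ofs + l]"
  using INV_all[of k] unfolding INV_def by blast

lemma INV_mono: "k < eta \<Longrightarrow> 1 \<le> l \<Longrightarrow> l < l' \<Longrightarrow> l' \<le> k \<Longrightarrow> p l' < p l"
  using INV_all[of k] unfolding INV_def by blast

lemma INV_nth1: "k < eta \<Longrightarrow> q < length X \<Longrightarrow> (\<forall>l. 1 \<le> l \<longrightarrow> l \<le> k \<longrightarrow> q \<noteq> p l) \<Longrightarrow> C k ! q = X ! q"
  using INV_all[of k] unfolding INV_def by blast

lemma INV_nth2: "k < eta \<Longrightarrow> 1 \<le> l \<Longrightarrow> l \<le> k \<Longrightarrow> C k ! p l = ofs + l"
  using INV_all[of k] unfolding INV_def by blast

lemma Xnn: "1 \<le> j \<Longrightarrow> j < eta \<Longrightarrow> nn (ofs + j) X \<and> hw (ofs+j) X = (if j = 1 then 1 else 0)"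
  using pre1 pre2[of j] by (cases "j = 1") auto

lemma Vwalk: assumes "1 \<le> j" "j < eta" shows
   "hw (ofs+j) (take i (C (j - 1))) = hw (ofs+j) (take i X) + (if 2 \<le> j \<and> p (j - 1) < i then 1 else 0)"
proof -
  have "\<not> j \<le> j - 1" "\<not> Suc j \<le> j - 1" using assms by auto
  then show ?thesis using INV_walk[of "j - 1" j i] assms by (simp add: corr_def)
qed

lemma post1:
  assumes j1: "1 \<le> j" and je: "j < eta"
  shows "nn (ofs+j) ((ofs + eta) # C (eta - 1)) \<and> hw (ofs+j) ((ofs + eta) # C (eta - 1)) = 0"
proof -
  let ?r = "ofs + j"
  define V where "V i = hw ?r (take i (C (j - 1)))" for i
  have Vf: "V i = hw ?r (take i X) + (if 2 \<le> j \<and> p (j - 1) < i then 1 else 0)" for i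
    unfolding V_def using Vwalk[OF j1 je] .
  have Pj: "Pk ?r (C (j-1)) 0 (p j)" and pjl: "p j < length X" using INV_P[of "eta - 1" j] j1 je by auto
  have lenj: "length (C (j - 1)) = length X" using INV_len[of "j - 1"] je by simp
  have Vpos: "V i > 0" if "p j < i" "i \<le> length X" for i
    using Pj that lenj unfolding Pk_def V_def by auto
  have pj1: "p (j - 1) < length X" if "2 \<le> j" using INV_P[of "eta - 1" "j - 1"] that je by auto
  have Vnn: "V i \<ge> 0" if "i \<le> length X" for i
    using Xnn[OF j1 je] that unfolding Vf nn_def by auto
  have Vfin: "V (length X) = 1"
    using Xnn[OF j1 je] pj1 j1 unfolding Vf by (auto simp del: One_nat_def)
  have mon: "p (Suc j) < p j" if "Suc j < eta" using INV_mono[of "eta - 1" j "Suc j"] that j1 by simp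
  have W: "hw ?r (take i (C (eta - 1))) = V i - (if p j < i then 2 else 0) + (if Suc j < eta \<and> p (Suc j) < i then 1 else 0)" for i
    using INV_walk[of "eta - 1" j i] j1 je unfolding Vf by (auto simp: corr_def)
  have dM: "dl ?r (ofs + eta) = (if Suc j = eta then 1 else 0)" using je by (auto simp: dl_def)
  have lenC: "length (C (eta - 1)) = length X" using INV_len[of "eta - 1"] je by simp
  have E: "hw ?r (take i ((ofs + eta) # C (eta - 1))) = (if i = 0 then 0 else
      V (i - 1) - (if p j < i - 1 then 2 else 0) + (if Suc j = eta \<or> p (Suc j) < i - 1 then 1 else 0))" for i
    unfolding hw_take_Cons W dM using je by auto
  have "nn ?r ((ofs + eta) # C (eta - 1))" unfolding nn_def
  proof (intro allI impI)
    fix i assume i: "i \<le> length ((ofs + eta) # C (eta - 1))"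
    then have il: "i - 1 \<le> length X" using lenC by simp
    show "hw ?r (take i ((ofs + eta) # C (eta - 1))) \<ge> 0"
    proof (cases "i = 0")
      case True then show ?thesis unfolding E by simp
    next
      case False
      show ?thesis
      proof (cases "p j < i - 1")
        case True
        have "V (i - 1) > 0" using Vpos[OF True il] .
        moreover have "Suc j = eta \<or> p (Suc j) < i - 1" using mon True je by (cases "Suc j < eta") auto
        ultimately show ?thesis unfolding E using False True by auto
      next
        case F2: False
        then show ?thesis unfolding E using False Vnn[OF il] by auto
      qed
    qed
  qed
  moreover have "hw ?r ((ofs + eta) # C (eta - 1)) = 0"
  proof -
    have "hw ?r ((ofs + eta) # C (eta - 1)) = hw ?r (take (Suc (length X)) ((ofs + eta) # C (eta - 1)))"
      using lenC by simp
    also have "\<dots> = 0" unfolding E using Vfin pjl mon je by (cases "Suc j < eta") auto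
    finally show ?thesis .
  qed
  ultimately show ?thesis by simp
qed

lemma post_bal:
  assumes j1: "1 \<le> j" and je: "Suc j < eta"
  shows "nn (ofs+j) (C (eta - 1)) \<and> hw (ofs+j) (C (eta - 1)) = 0"
proof -
  have d: "dl (ofs + j) (ofs + eta) = 0" using je by (auto simp: dl_def)
  have "nn (ofs+j) ((ofs + eta) # C (eta - 1)) \<and> hw (ofs+j) ((ofs + eta) # C (eta - 1)) = 0"
    using post1[OF j1] je by simp
  then show ?thesis using d unfolding nn_def
    by (auto simp: hw_take_Cons)
qed

lemma other_brackets:
  assumes k: "k < eta" and r: "r < ofs \<or> ofs + eta < r"
  shows "map (dl r) (C k) = map (dl r) X"
proof (rule nth_equalityI)
  show "length (map (dl r) (C k)) = length (map (dl r) X)" using INV_len[OF k] by simp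
  fix q assume "q < length (map (dl r) (C k))"
  then have q: "q < length X" using INV_len[OF k] by simp
  show "map (dl r) (C k) ! q = map (dl r) X ! q"
  proof (cases "\<exists>l. 1 \<le> l \<and> l \<le> k \<and> q = p l")
    case True
    then obtain l where l: "1 \<le> l" "l \<le> k" "q = p l" by blast
    have "C k ! q = ofs + l" using INV_nth2[OF k l(1,2)] l(3) by simp
    moreover have "X ! q = Suc (ofs + l)" using INV_P[OF k l(1,2)] l(3) by simp
    moreover have "l < eta" using l k by simp
    ultimately show ?thesis using q INV_len[OF k] r l(1) by (auto simp: dl_def)
  next
    case False
    then show ?thesis using INV_nth1[OF k q] q INV_len[OF k] by auto
  qed
qed

end

lemma act_Nil[simp]: "act [] v = v" by (simp add: act_def)
lemma act_Cons[simp]: "act (r # rs) v = s_op r (act rs v)" by (simp add: act_def)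
lemma act_append[simp]: "act (xs @ ys) v = act xs (act ys v)" by (simp add: act_def)

lemma act_chn: "act (rev [ofs + 1..<ofs + k + 1]) v = chn ofs v k"
  by (induction k) auto

definition GG :: "nat \<Rightarrow> nat \<Rightarrow> nat list" where
  "GG ofs eta = concat (map (\<lambda>k. rev [ofs + 1..<ofs + k + 1]) [1..<eta])"

lemma w0R_GG: "w0R_word R = concat (map (\<lambda>i. GG (offset R i) (rect_rows R i)) [0..<length R])"
  unfolding w0R_word_def GG_def by simp

definition balB :: "nat \<Rightarrow> nat \<Rightarrow> nat list \<Rightarrow> bool" where
  "balB ofs eta v = (\<forall>j. 1 \<le> j \<longrightarrow> j < eta \<longrightarrow> nn (ofs+j) v \<and> hw (ofs+j) v = 0)"

lemma act_bal: "(\<forall>r\<in>set rs. nn r v \<and> hw r v = 0) \<Longrightarrow> act rs v = v"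
  by (induction rs) (auto simp: s_op_bal)

lemma set_GG: "r \<in> set (GG ofs eta) \<Longrightarrow> ofs < r \<and> r < ofs + eta"
  unfolding GG_def by auto

lemma set_GG2: "r \<in> set (GG ofs (eta - 1)) \<Longrightarrow> ofs < r \<and> Suc r < ofs + eta"
  unfolding GG_def by auto

lemma act_GG_bal: "balB ofs eta v \<Longrightarrow> act (GG ofs eta) v = v"
proof (rule act_bal, intro ballI)
  fix r assume b: "balB ofs eta v" and r: "r \<in> set (GG ofs eta)"
  have e: "r = ofs + (r - ofs)" "1 \<le> r - ofs" "r - ofs < eta" using set_GG[OF r] by auto
  then have "nn (ofs + (r - ofs)) v \<and> hw (ofs + (r - ofs)) v = 0" using b unfolding balB_def by blast
  then show "nn r v \<and> hw r v = 0" using e(1) by simp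
qed

lemma GG_split: "2 \<le> eta \<Longrightarrow> GG ofs eta = GG ofs (eta - 1) @ rev [ofs + 1..<ofs + (eta - 1) + 1]"
proof -
  assume "2 \<le> eta"
  then have "[1..<eta] = [1..<eta - 1] @ [eta - 1]"
    using upt_Suc_append[of 1 "eta - 1"] by simp
  then show ?thesis unfolding GG_def by simp
qed

context chainX begin

lemma act_GG_chain: "act (GG ofs eta) X = C (eta - 1)"
proof (cases "2 \<le> eta")
  case True
  have "act (GG ofs eta) X = act (GG ofs (eta - 1)) (C (eta - 1))"
    using GG_split[OF True] act_chn[of ofs "eta - 1" X] by simp
  also have "\<dots> = C (eta - 1)"
  proof (rule act_bal, intro ballI)
    fix r assume r: "r \<in> set (GG ofs (eta - 1))"
    have j: "r = ofs + (r - ofs)" "1 \<le> r - ofs" "Suc (r - ofs) < eta" using set_GG2[OF r] by auto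
    show "nn r (C (eta - 1)) \<and> hw r (C (eta - 1)) = 0" using post_bal[OF j(2,3)] j(1) by simp
  qed
  finally show ?thesis .
next
  case False
  then have "[1..<eta] = []" by simp
  then show ?thesis using False unfolding GG_def by (simp add: not_le less_Suc_eq_le)
qed

end

lemma offset_Suc: "offset R (Suc i) = offset R i + rect_rows R i"
  by (simp add: offset_def)

lemma offset_mono: "i \<le> j \<Longrightarrow> offset R i \<le> offset R j"
  unfolding offset_def by (rule sum_mono2) auto

lemma offset_lt: "i < j \<Longrightarrow> offset R i + rect_rows R i \<le> offset R j"
  using offset_mono[of "Suc i" j R] by (simp add: offset_Suc)

lemma total_offset: "total_n R = offset R (length R)"
  by (simp add: total_n_def offset_def)

lemma block_exists: "0 < a \<Longrightarrow> a \<le> offset R n \<Longrightarrow> \<exists>i<n. offset R i < a \<and> a \<le> offset R i + rect_rows R i"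
proof (induction n)
  case 0 then show ?case by (simp add: offset_def)
next
  case (Suc n)
  show ?case
  proof (cases "a \<le> offset R n")
    case True then show ?thesis using Suc by (meson less_SucI)
  next
    case False then show ?thesis using Suc.prems by (auto simp: offset_Suc intro: exI[of _ n])
  qed
qed

lemma block_unique: "offset R i < a \<Longrightarrow> a \<le> offset R i + rect_rows R i \<Longrightarrow>
   offset R j < a \<Longrightarrow> a \<le> offset R j + rect_rows R j \<Longrightarrow> i = j"
  by (metis linorder_neqE_nat offset_lt order.strict_trans2 order_less_irrefl)

lemma other_block_bracket:
  assumes "i' \<noteq> i" "offset R i' < r" "r < offset R i' + rect_rows R i'"
  shows "r < offset R i \<or> offset R i + rect_rows R i < r"
proof (cases "i' < i")
  case True then show ?thesis using offset_lt[OF True, of R] assms by simp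
next
  case False then have "i < i'" using assms(1) by simp
  then show ?thesis using offset_lt[of i i' R] assms by simp
qed

lemma other_block_letter:
  assumes "i' \<noteq> i" "offset R i' < r" "r < offset R i' + rect_rows R i'"
    "offset R i < a" "a \<le> offset R i + rect_rows R i"
  shows "dl r a = 0"
proof (cases "i' < i")
  case True then show ?thesis using offset_lt[OF True, of R] assms by (auto simp: dl_def)
next
  case False then have "i < i'" using assms(1) by simp
  then show ?thesis using offset_lt[of i i' R] assms by (auto simp: dl_def)
qed

lemma hw_map_eq: "map (dl r) v = map (dl r) v' \<Longrightarrow> hw r (take i v) = hw r (take i v')"
  unfolding hw_def by (metis take_map)

lemma nn_map_eq: "map (dl r) v = map (dl r) v' \<Longrightarrow> nn r v = nn r v' \<and> hw r v = hw r v'"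
proof -
  assume h: "map (dl r) v = map (dl r) v'"
  then have l: "length v = length v'" by (metis length_map)
  have "hw r v = hw r v'" using h by (simp add: hw_def)
  moreover have "nn r v = nn r v'" unfolding nn_def using hw_map_eq[OF h] l by simp
  ultimately show ?thesis by simp
qed

definition balR :: "(nat \<times> nat) list \<Rightarrow> nat list \<Rightarrow> bool" where
  "balR R v = (\<forall>i < length R. balB (offset R i) (rect_rows R i) v)"

definition MR :: "(nat \<times> nat) list \<Rightarrow> nat \<Rightarrow> nat list \<Rightarrow> bool" where
  "MR R i0 v = (i0 < length R \<and> chainX (offset R i0) (rect_rows R i0) v \<and>
     (\<forall>i < length R. i \<noteq> i0 \<longrightarrow> balB (offset R i) (rect_rows R i) v))"

lemma balB_map_eq:
  assumes "balB ofs eta v" "\<And>r. ofs < r \<Longrightarrow> r < ofs + eta \<Longrightarrow> map (dl r) v' = map (dl r) v"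
  shows "balB ofs eta v'"
  unfolding balB_def
proof (intro allI impI)
  fix j assume j: "1 \<le> j" "j < eta"
  then have "map (dl (ofs+j)) v' = map (dl (ofs+j)) v" using assms(2) by simp
  then show "nn (ofs + j) v' \<and> hw (ofs + j) v' = 0" using nn_map_eq assms(1) j unfolding balB_def by metis
qed

lemma W_MR_gen:
  assumes M: "MR R i0 v" and d: "distinct ixs" and s: "set ixs \<subseteq> {..<length R}"
  shows "act (concat (map (\<lambda>i. GG (offset R i) (rect_rows R i)) ixs)) v =
     (if i0 \<in> set ixs then chn (offset R i0) v (rect_rows R i0 - 1) else v)"
  using d s
proof (induction ixs)
  case Nil then show ?case by simp
next
  case (Cons i ixs)
  from M have i0l: "i0 < length R" and CX: "chainX (offset R i0) (rect_rows R i0) v"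
    and oth: "\<And>i. i < length R \<Longrightarrow> i \<noteq> i0 \<Longrightarrow> balB (offset R i) (rect_rows R i) v"
    unfolding MR_def by auto
  have IH: "act (concat (map (\<lambda>i. GG (offset R i) (rect_rows R i)) ixs)) v =
     (if i0 \<in> set ixs then chn (offset R i0) v (rect_rows R i0 - 1) else v)" using Cons by auto
  have il: "i < length R" using Cons.prems by simp
  show ?case
  proof (cases "i = i0")
    case True
    then have "i0 \<notin> set ixs" using Cons.prems by auto
    then show ?thesis using IH True chainX.act_GG_chain[OF CX] by simp
  next
    case False
    have bv: "balB (offset R i) (rect_rows R i) v" using oth[OF il False] .
    have bc: "balB (offset R i) (rect_rows R i) (chn (offset R i0) v (rect_rows R i0 - 1))"
    proof (rule balB_map_eq[OF bv])
      fix r assume "offset R i < r" "r < offset R i + rect_rows R i"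
      then have "r < offset R i0 \<or> offset R i0 + rect_rows R i0 < r"
        using other_block_bracket[OF False] by blast
      then show "map (dl r) (chn (offset R i0) v (rect_rows R i0 - 1)) = map (dl r) v"
        using chainX.other_brackets[OF CX, of "rect_rows R i0 - 1" r]
        by (cases "rect_rows R i0") auto
    qed
    show ?thesis using IH False act_GG_bal[OF bv] act_GG_bal[OF bc] by simp
  qed
qed

lemma W_MR: "MR R i0 v \<Longrightarrow> act (w0R_word R) v = chn (offset R i0) v (rect_rows R i0 - 1)"
proof -
  assume M: "MR R i0 v"
  have "set [0..<length R] \<subseteq> {..<length R}" by auto
  then show ?thesis using W_MR_gen[OF M, of "[0..<length R]"] M unfolding w0R_GG MR_def by auto
qed

lemma s_op_self: "s_op r [r] = [Suc r]"
  by (simp add: s_op_def)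

lemma s_op_neutral1: "dl r a = 0 \<Longrightarrow> s_op r [a] = [a]"
  by (rule s_op_bal) (auto simp: nn_def hw_take_Cons)

lemma chn_single: "chn ofs [Suc ofs] k = [ofs + Suc k]"
  by (induction k) (auto simp: s_op_self)

lemma act_neutral1: "(\<forall>r\<in>set rs. dl r a = 0) \<Longrightarrow> act rs [a] = [a]"
  by (induction rs) (auto simp: s_op_neutral1)

lemma act_GG_single: "1 \<le> eta \<Longrightarrow> act (GG ofs eta) [Suc ofs] = [ofs + eta]"
proof (cases "2 \<le> eta")
  case True
  have "act (GG ofs eta) [Suc ofs] = act (GG ofs (eta - 1)) (chn ofs [Suc ofs] (eta - 1))"
    using GG_split[OF True] act_chn[of ofs "eta - 1" "[Suc ofs]"] by simp
  also have "\<dots> = act (GG ofs (eta - 1)) [ofs + eta]" using True chn_single[of ofs "eta - 1"] by simp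
  also have "\<dots> = [ofs + eta]"
  proof (rule act_neutral1, intro ballI)
    fix r assume "r \<in> set (GG ofs (eta - 1))"
    then have "ofs < r \<and> Suc r < ofs + eta" by (rule set_GG2)
    then show "dl r (ofs + eta) = 0" by (auto simp: dl_def)
  qed
  finally show ?thesis .
next
  case False
  assume "1 \<le> eta"
  then have "eta = 1" using False by simp
  then show ?thesis by (simp add: GG_def)
qed

lemma W_single_gen:
  assumes i0l: "i0 < length R" and r1: "1 \<le> rect_rows R i0"
    and d: "distinct ixs" and s: "set ixs \<subseteq> {..<length R}"
  shows "act (concat (map (\<lambda>i. GG (offset R i) (rect_rows R i)) ixs)) [Suc (offset R i0)] =
     (if i0 \<in> set ixs then [offset R i0 + rect_rows R i0] else [Suc (offset R i0)])"
  using d s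
proof (induction ixs)
  case Nil then show ?case by simp
next
  case (Cons i ixs)
  have IH: "act (concat (map (\<lambda>i. GG (offset R i) (rect_rows R i)) ixs)) [Suc (offset R i0)] =
     (if i0 \<in> set ixs then [offset R i0 + rect_rows R i0] else [Suc (offset R i0)])" using Cons by auto
  have il: "i < length R" using Cons.prems by simp
  show ?case
  proof (cases "i = i0")
    case True
    then have "i0 \<notin> set ixs" using Cons.prems by auto
    then show ?thesis using IH True act_GG_single[OF r1] by simp
  next
    case False
    have n: "dl r a = 0" if "r \<in> set (GG (offset R i) (rect_rows R i))" "offset R i0 < a" "a \<le> offset R i0 + rect_rows R i0" for r a
      using other_block_letter[OF False, of R r a] set_GG[OF that(1)] that(2,3) by simp
    have "act (GG (offset R i) (rect_rows R i)) [a] = [a]" if "offset R i0 < a" "a \<le> offset R i0 + rect_rows R i0" for a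
      using act_neutral1 n that by blast
    then show ?thesis using IH False r1 by simp
  qed
qed

lemma W_single: "i0 < length R \<Longrightarrow> 1 \<le> rect_rows R i0 \<Longrightarrow>
  act (w0R_word R) [Suc (offset R i0)] = [offset R i0 + rect_rows R i0]"
proof -
  assume a: "i0 < length R" "1 \<le> rect_rows R i0"
  have "set [0..<length R] \<subseteq> {..<length R}" by auto
  then show ?thesis using W_single_gen[OF a, of "[0..<length R]"] a unfolding w0R_GG by auto
qed

lemma last_letter:
  assumes b: "balR R (v @ [c])" and il: "i < length R" and c: "offset R i < c" "c \<le> offset R i + rect_rows R i"
  shows "c = Suc (offset R i)"
proof (rule ccontr)
  assume ne: "c \<noteq> Suc (offset R i)"
  define j where "j = c - Suc (offset R i)"
  have j: "1 \<le> j" "j < rect_rows R i" "Suc (offset R i + j) = c" using ne c unfolding j_def by auto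
  have "nn (offset R i + j) (v @ [c]) \<and> hw (offset R i + j) (v @ [c]) = 0"
    using b il j unfolding balR_def balB_def by blast
  then have "hw (offset R i + j) v \<ge> 0" "hw (offset R i + j) v + 1 = 0"
    using nn_snoc[of _ v c] nn_final j(3) by (auto simp: dl_def)
  then show False by simp
qed

lemma MR_snoc:
  assumes b: "balR R (v @ [Suc (offset R i0)])" and il: "i0 < length R" and r1: "1 \<le> rect_rows R i0"
  shows "MR R i0 v"
proof -
  let ?c = "Suc (offset R i0)"
  have neu: "nn r (v @ [?c]) = nn r v \<and> hw r (v @ [?c]) = hw r v" if "dl r ?c = 0" for r
    using that nn_snoc[of r v ?c] nn_final by auto
  have "chainX (offset R i0) (rect_rows R i0) v"
  proof
    assume "2 \<le> rect_rows R i0"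
    then have "nn (Suc (offset R i0)) (v @ [?c]) \<and> hw (Suc (offset R i0)) (v @ [?c]) = 0"
      using b il unfolding balR_def balB_def by (metis One_nat_def add_Suc_right add.right_neutral le_numeral_extra(4) one_le_numeral order_less_le_trans numeral_2_eq_2 Suc_le_lessD)
    then show "nn (Suc (offset R i0)) v \<and> hw (Suc (offset R i0)) v = 1"
      using nn_snoc[of _ v ?c] by (auto simp: dl_def)
  next
    fix j assume j: "2 \<le> j" "j < rect_rows R i0"
    then have "nn (offset R i0 + j) (v @ [?c]) \<and> hw (offset R i0 + j) (v @ [?c]) = 0"
      using b il unfolding balR_def balB_def by auto
    moreover have "dl (offset R i0 + j) ?c = 0" using j by (auto simp: dl_def)
    ultimately show "nn (offset R i0 + j) v \<and> hw (offset R i0 + j) v = 0" using neu by simp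
  qed
  moreover have "balB (offset R i) (rect_rows R i) v" if "i < length R" "i \<noteq> i0" for i
    unfolding balB_def
  proof (intro allI impI)
    fix j assume j: "1 \<le> j" "j < rect_rows R i"
    then have "nn (offset R i + j) (v @ [?c]) \<and> hw (offset R i + j) (v @ [?c]) = 0"
      using b that unfolding balR_def balB_def by auto
    moreover have "dl (offset R i + j) ?c = 0"
      using other_block_letter[OF that(2), of R "offset R i + j" ?c] j il r1 by simp
    ultimately show "nn (offset R i + j) v \<and> hw (offset R i + j) v = 0" using neu by simp
  qed
  ultimately show ?thesis unfolding MR_def using il by simp
qed

lemma chi_Cons: "chi R (a # w) = act (w0R_word R) [last (a # w)] @ act (w0R_word R) (butlast (a # w))"
  by simp

lemma chi_step:
  assumes rows: "\<forall>i<length R. 1 \<le> rect_rows R i" and b: "balR R w"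
    and s: "set w \<subseteq> {1..total_n R}" and ne: "w \<noteq> []"
  shows "\<exists>i<length R. last w = Suc (offset R i) \<and> MR R i (butlast w) \<and>
     chi R w = (offset R i + rect_rows R i) # chn (offset R i) (butlast w) (rect_rows R i - 1)"
proof -
  let ?c = "last w"
  have "?c \<in> set w" using ne by simp
  then have c1: "0 < ?c" "?c \<le> offset R (length R)" using s total_offset[of R] by auto
  obtain i where il: "i < length R" and ci: "offset R i < ?c" "?c \<le> offset R i + rect_rows R i"
    using block_exists[OF c1] by blast
  have wsplit: "w = butlast w @ [?c]" using ne by simp
  have bc: "balR R (butlast w @ [?c])" using b wsplit by simp
  have c: "?c = Suc (offset R i)" using last_letter[OF bc il ci] .
  have M: "MR R i (butlast w)" using MR_snoc[of R "butlast w" i] bc c il rows by simp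
  obtain a w' where aw: "w = a # w'" using ne by (cases w) auto
  have "chi R w = act (w0R_word R) [?c] @ act (w0R_word R) (butlast w)"
    unfolding aw chi_Cons by simp
  also have "\<dots> = [offset R i + rect_rows R i] @ chn (offset R i) (butlast w) (rect_rows R i - 1)"
    using W_single[OF il] rows il c W_MR[OF M] by simp
  finally show ?thesis using il c M by auto
qed

lemma nn_Cons_neutral: "dl r a = 0 \<Longrightarrow> nn r (a # x) = nn r x \<and> hw r (a # x) = hw r x"
  unfolding nn_def by (auto simp: hw_take_Cons)

context chainX begin

lemma set_C: "k < eta \<Longrightarrow> set (C k) \<subseteq> set X \<union> {Suc ofs..<ofs + eta}"
proof
  fix b assume k: "k < eta" and "b \<in> set (C k)"
  then obtain q where q: "q < length (C k)" "C k ! q = b" by (auto simp: in_set_conv_nth)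
  then have ql: "q < length X" using INV_len[OF k] by simp
  show "b \<in> set X \<union> {Suc ofs..<ofs + eta}"
  proof (cases "\<exists>l. 1 \<le> l \<and> l \<le> k \<and> q = p l")
    case True
    then obtain l where l: "1 \<le> l" "l \<le> k" "q = p l" by blast
    then show ?thesis using INV_nth2[OF k l(1,2)] q k by auto
  next
    case False
    then show ?thesis using INV_nth1[OF k ql] q ql by auto
  qed
qed

end

lemma chi_props:
  assumes rows: "\<forall>i<length R. 1 \<le> rect_rows R i" and M: "MR R i v"
    and s: "set v \<subseteq> {1..total_n R}"
  shows "balR R ((offset R i + rect_rows R i) # chn (offset R i) v (rect_rows R i - 1)) \<and>
         set ((offset R i + rect_rows R i) # chn (offset R i) v (rect_rows R i - 1)) \<subseteq> {1..total_n R} \<and>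
         length (chn (offset R i) v (rect_rows R i - 1)) = length v"
proof -
  from M have il: "i < length R" and CX: "chainX (offset R i) (rect_rows R i) v"
    and oth: "\<And>i'. i' < length R \<Longrightarrow> i' \<noteq> i \<Longrightarrow> balB (offset R i') (rect_rows R i') v"
    unfolding MR_def by auto
  let ?o = "offset R i" and ?e = "rect_rows R i"
  have e1: "1 \<le> ?e" using rows il by simp
  let ?w = "(?o + ?e) # chn ?o v (?e - 1)"
  have tot: "?o + ?e \<le> total_n R" using offset_mono[of "Suc i" "length R" R] il
    by (simp add: offset_Suc total_offset)
  have b: "balR R ?w" unfolding balR_def
  proof (intro allI impI)
    fix i' assume i'l: "i' < length R"
    show "balB (offset R i') (rect_rows R i') ?w"
    proof (cases "i' = i")
      case True then show ?thesis using chainX.post1[OF CX] unfolding balB_def by simp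
    next
      case False
      show ?thesis unfolding balB_def
      proof (intro allI impI)
        fix j assume j: "1 \<le> j" "j < rect_rows R i'"
        let ?r = "offset R i' + j"
        have r: "offset R i' < ?r" "?r < offset R i' + rect_rows R i'" using j by auto
        have d: "dl ?r (?o + ?e) = 0" using other_block_letter[OF False r, of "?o + ?e"] e1 by simp
        have "map (dl ?r) (chn ?o v (?e - 1)) = map (dl ?r) v"
          using chainX.other_brackets[OF CX, of "?e - 1" ?r] other_block_bracket[OF False r] e1 by auto
        then have "nn ?r (chn ?o v (?e - 1)) = nn ?r v \<and> hw ?r (chn ?o v (?e - 1)) = hw ?r v"
          by (rule nn_map_eq)
        moreover have "nn ?r v \<and> hw ?r v = 0" using oth[OF i'l False] j unfolding balB_def by blast
        ultimately show "nn ?r ?w \<and> hw ?r ?w = 0" using nn_Cons_neutral[OF d] by simp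
      qed
    qed
  qed
  have "set (chn ?o v (?e - 1)) \<subseteq> set v \<union> {Suc ?o..<?o + ?e}" using chainX.set_C[OF CX, of "?e - 1"] e1 by simp
  then have "set ?w \<subseteq> {1..total_n R}" using s tot e1 by auto
  moreover have "length (chn ?o v (?e - 1)) = length v" using chainX.INV_len[OF CX, of "?e - 1"] e1 by simp
  ultimately show ?thesis using b by simp
qed

lemma corr_cong:
  assumes "\<And>m. 1 \<le> m \<Longrightarrow> m \<le> k \<Longrightarrow> (P' m < i \<longleftrightarrow> P m < i')" and "1 \<le> j"
  shows "corr P' k j i = corr P k j i'"
proof -
  have a: "j \<le> k \<Longrightarrow> (P' j < i \<longleftrightarrow> P j < i')" using assms by simp
  have b: "Suc j \<le> k \<Longrightarrow> (P' (Suc j) < i \<longleftrightarrow> P (Suc j) < i')" using assms by simp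
  have c: "2 \<le> j \<Longrightarrow> j \<le> Suc k \<Longrightarrow> (P' (j - 1) < i \<longleftrightarrow> P (j - 1) < i')" using assms(1)[of "j - 1"] by simp
  show ?thesis unfolding corr_def using a b c by auto
qed

lemma chain_transfer:
  assumes CX: "chainX ofs eta X" and CX': "chainX ofs eta X'"
    and W: "\<And>j i. 1 \<le> j \<Longrightarrow> j < eta \<Longrightarrow> i \<le> length X' \<Longrightarrow>
               hw (ofs+j) (take i X') = hw (ofs+j) (take (un i) X)"
    and U1: "\<And>i. i \<le> length X' \<Longrightarrow> un i \<le> length X"
    and S1: "\<And>p. p < length X \<Longrightarrow> sh p < length X' \<and> un (sh p) = p"
    and S2: "\<And>p i. p < length X \<Longrightarrow> i \<le> length X' \<Longrightarrow> (sh p < i \<longleftrightarrow> p < un i)"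
  shows "k < eta \<Longrightarrow> (\<forall>l. 1 \<le> l \<longrightarrow> l \<le> k \<longrightarrow> pp ofs X' l = sh (pp ofs X l))"
proof (induction k)
  case 0 then show ?case by simp
next
  case (Suc k)
  then have IH: "\<And>l. 1 \<le> l \<Longrightarrow> l \<le> k \<Longrightarrow> pp ofs X' l = sh (pp ofs X l)" by simp
  have kl: "Suc k < eta" using Suc.prems .
  let ?r = "ofs + Suc k"
  have P: "Pk ?r (chn ofs X k) 0 (pp ofs X (Suc k))" and pl: "pp ofs X (Suc k) < length X"
    using chainX.INV_P[OF CX kl, of "Suc k"] by auto
  have P': "Pk ?r (chn ofs X' k) 0 (pp ofs X' (Suc k))"
    using chainX.INV_P[OF CX' kl, of "Suc k"] by auto
  have lenC: "length (chn ofs X k) = length X" using chainX.INV_len[OF CX, of k] kl by simp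
  have lenC': "length (chn ofs X' k) = length X'" using chainX.INV_len[OF CX', of k] kl by simp
  have wt: "hw ?r (take i (chn ofs X' k)) = hw ?r (take (un i) (chn ofs X k))" if il: "i \<le> length X'" for i
  proof -
    have "hw ?r (take i (chn ofs X' k)) = hw ?r (take i X') + corr (pp ofs X') k (Suc k) i"
      using chainX.INV_walk[OF CX', of k "Suc k" i] kl by simp
    also have "\<dots> = hw ?r (take (un i) X) + corr (pp ofs X) k (Suc k) (un i)"
    proof -
      have "corr (pp ofs X') k (Suc k) i = corr (pp ofs X) k (Suc k) (un i)"
      proof (rule corr_cong)
        fix m assume m: "1 \<le> m" "m \<le> k"
        have "pp ofs X m < length X" using chainX.INV_P[OF CX, of k m] m kl by simp
        then show "pp ofs X' m < i \<longleftrightarrow> pp ofs X m < un i" using IH[OF m] S2 il by simp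
      qed simp
      then show ?thesis using W[of "Suc k" i] kl il by simp
    qed
    also have "\<dots> = hw ?r (take (un i) (chn ofs X k))"
      using chainX.INV_walk[OF CX, of k "Suc k" "un i"] kl by simp
    finally show ?thesis .
  qed
  have "Pk ?r (chn ofs X' k) 0 (sh (pp ofs X (Suc k)))"
    unfolding Pk_def
  proof (intro conjI allI impI)
    show "sh (pp ofs X (Suc k)) < length (chn ofs X' k)" using S1[OF pl] lenC' by simp
    show "hw ?r (take (sh (pp ofs X (Suc k))) (chn ofs X' k)) = int 0"
      using wt[of "sh (pp ofs X (Suc k))"] S1[OF pl] P unfolding Pk_def by simp
    fix i assume i: "sh (pp ofs X (Suc k)) < i \<and> i \<le> length (chn ofs X' k)"
    then have "pp ofs X (Suc k) < un i" "un i \<le> length (chn ofs X k)" using S2[OF pl] U1 lenC lenC' by auto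
    then show "hw ?r (take i (chn ofs X' k)) > int 0" using wt[of i] i lenC' P unfolding Pk_def by auto
  qed
  then have "pp ofs X' (Suc k) = sh (pp ofs X (Suc k))" using P' Pk_unique by blast
  then show ?case using IH by (metis le_Suc_eq)
qed

definition ins :: "nat \<Rightarrow> nat \<Rightarrow> nat list \<Rightarrow> nat list" where
  "ins k0 a X = take k0 X @ a # drop k0 X"

lemma ins_len[simp]: "k0 \<le> length X \<Longrightarrow> length (ins k0 a X) = Suc (length X)"
  by (simp add: ins_def)

lemma walk_ins:
  assumes "k0 \<le> length X" "dl r a = 0"
  shows "hw r (take i (ins k0 a X)) = hw r (take (if i \<le> k0 then i else i - 1) X)"
proof (cases "i \<le> k0")
  case True then show ?thesis using assms by (simp add: ins_def)
next
  case False
  then obtain m where m: "i = Suc (k0 + m)" by (metis add_Suc_right less_imp_Suc_add not_le)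
  have "take i (ins k0 a X) = take k0 X @ a # take m (drop k0 X)" using assms m by (simp add: ins_def)
  moreover have "take (i - 1) X = take k0 X @ take m (drop k0 X)" using m by (simp add: take_add)
  ultimately show ?thesis using False assms by simp
qed

lemma nth_ins: "k0 \<le> length X \<Longrightarrow> q \<le> length X \<Longrightarrow>
   ins k0 a X ! q = (if q < k0 then X ! q else if q = k0 then a else X ! (q - 1))"
  by (auto simp: ins_def nth_append min_def)

lemma chainX_ins:
  assumes CX: "chainX ofs eta X" and k0: "k0 \<le> length X"
    and a: "\<And>j. 1 \<le> j \<Longrightarrow> j < eta \<Longrightarrow> dl (ofs + j) a = 0"
  shows "chainX ofs eta (ins k0 a X)"
proof -
  have tr: "nn (ofs+j) (ins k0 a X) = nn (ofs+j) X \<and> hw (ofs+j) (ins k0 a X) = hw (ofs+j) X"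
    if j: "1 \<le> j" "j < eta" for j
  proof -
    have w: "hw (ofs+j) (take i (ins k0 a X)) = hw (ofs+j) (take (if i \<le> k0 then i else i - 1) X)" for i
      using walk_ins[OF k0 a[OF j]] .
    have "hw (ofs+j) (ins k0 a X) = hw (ofs+j) X"
      using w[of "Suc (length X)"] k0 by simp
    moreover have "nn (ofs+j) (ins k0 a X) = nn (ofs+j) X"
    proof
      assume h: "nn (ofs+j) (ins k0 a X)"
      show "nn (ofs+j) X" unfolding nn_def
      proof (intro allI impI)
        fix i assume i: "i \<le> length X"
        define i' where "i' = (if i \<le> k0 then i else Suc i)"
        have "i' \<le> length (ins k0 a X)" using i k0 unfolding i'_def by auto
        then have "hw (ofs+j) (take i' (ins k0 a X)) \<ge> 0" using h unfolding nn_def by blast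
        moreover have "(if i' \<le> k0 then i' else i' - 1) = i" unfolding i'_def by auto
        ultimately show "hw (ofs+j) (take i X) \<ge> 0" using w[of i'] by simp
      qed
    next
      assume h: "nn (ofs+j) X"
      show "nn (ofs+j) (ins k0 a X)" unfolding nn_def
      proof (intro allI impI)
        fix i assume "i \<le> length (ins k0 a X)"
        then have "(if i \<le> k0 then i else i - 1) \<le> length X" using k0 by auto
        then show "hw (ofs+j) (take i (ins k0 a X)) \<ge> 0" using h w unfolding nn_def by simp
      qed
    qed
    ultimately show ?thesis by simp
  qed
  show ?thesis
  proof
    assume "2 \<le> eta"
    then show "nn (Suc ofs) (ins k0 a X) \<and> hw (Suc ofs) (ins k0 a X) = 1"
      using tr[of 1] chainX.pre1[OF CX] by simp
  next
    fix j assume "2 \<le> j" "j < eta"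
    then show "nn (ofs + j) (ins k0 a X) \<and> hw (ofs + j) (ins k0 a X) = 0"
      using tr[of j] chainX.pre2[OF CX] by simp
  qed
qed

lemma chn_ins:
  assumes CX: "chainX ofs eta X" and k0: "k0 \<le> length X"
    and a: "\<And>j. 1 \<le> j \<Longrightarrow> j < eta \<Longrightarrow> dl (ofs + j) a = 0" and k: "k < eta"
  shows "chn ofs (ins k0 a X) k = ins k0 a (chn ofs X k)"
proof -
  let ?X' = "ins k0 a X"
  have CX': "chainX ofs eta ?X'" by (rule chainX_ins[OF CX k0 a])
  define un where "un i = (if i \<le> k0 then i else i - 1)" for i
  define sh where "sh p = (if p < k0 then p else Suc p)" for p
  have tr: "\<forall>l. 1 \<le> l \<longrightarrow> l \<le> k \<longrightarrow> pp ofs ?X' l = sh (pp ofs X l)"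
  proof (rule chain_transfer[OF CX CX', where un=un and sh=sh, OF _ _ _ _ k])
    fix j i assume j: "1 \<le> j" "j < eta" and "i \<le> length ?X'"
    show "hw (ofs+j) (take i ?X') = hw (ofs+j) (take (un i) X)"
      unfolding un_def using walk_ins[OF k0 a[OF j]] .
  next
    fix i assume "i \<le> length ?X'" then show "un i \<le> length X" using k0 unfolding un_def by auto
  next
    fix p assume "p < length X" then show "sh p < length ?X' \<and> un (sh p) = p"
      using k0 unfolding un_def sh_def by auto
  next
    fix p i assume "p < length X" "i \<le> length ?X'" then show "sh p < i \<longleftrightarrow> p < un i"
      unfolding un_def sh_def by auto
  qed
  have lenC: "length (chn ofs X k) = length X" using chainX.INV_len[OF CX k] .
  have lenC': "length (chn ofs ?X' k) = Suc (length X)" using chainX.INV_len[OF CX' k] k0 by simp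
  show ?thesis
  proof (rule nth_equalityI)
    show "length (chn ofs ?X' k) = length (ins k0 a (chn ofs X k))" using lenC lenC' k0 by simp
  next
    fix q assume "q < length (chn ofs ?X' k)"
    then have ql: "q < Suc (length X)" using lenC' by simp
    have R: "ins k0 a (chn ofs X k) ! q = (if q < k0 then chn ofs X k ! q else if q = k0 then a else chn ofs X k ! (q - 1))"
      using nth_ins[of k0 "chn ofs X k" q a] k0 lenC ql by simp
    have X'q: "?X' ! q = (if q < k0 then X ! q else if q = k0 then a else X ! (q - 1))"
      using nth_ins[of k0 X q a] k0 ql by simp
    show "chn ofs ?X' k ! q = ins k0 a (chn ofs X k) ! q"
    proof (cases "\<exists>l. 1 \<le> l \<and> l \<le> k \<and> q = pp ofs ?X' l")
      case True
      then obtain l where l: "1 \<le> l" "l \<le> k" "q = pp ofs ?X' l" by blast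
      have L: "chn ofs ?X' k ! q = ofs + l" using chainX.INV_nth2[OF CX' k l(1,2)] l(3) by simp
      have pl: "pp ofs X l < length X" using chainX.INV_P[OF CX k l(1,2)] by simp
      have qs: "q = sh (pp ofs X l)" using tr l by simp
      have "chn ofs X k ! pp ofs X l = ofs + l" using chainX.INV_nth2[OF CX k l(1,2)] .
      then show ?thesis using L R qs pl unfolding sh_def by auto
    next
      case False
      then have L: "chn ofs ?X' k ! q = ?X' ! q" using chainX.INV_nth1[OF CX' k] ql k0 by simp
      have nP: "q' \<noteq> pp ofs X l" if "1 \<le> l" "l \<le> k" "q' < length X"
        "q' = (if q < k0 then q else q - 1)" "q \<noteq> k0" for l q'
      proof
        assume "q' = pp ofs X l"
        then have "q = sh (pp ofs X l)" using that unfolding sh_def by (auto split: if_splits)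
        then show False using False tr that by auto
      qed
      show ?thesis
      proof (cases "q < k0")
        case True
        have "chn ofs X k ! q = X ! q"
          using chainX.INV_nth1[OF CX k, of q] nP[of _ q] True k0 by auto
        then show ?thesis using L R X'q True by simp
      next
        case F2: False
        show ?thesis
        proof (cases "q = k0")
          case True then show ?thesis using L R X'q by simp
        next
          case F3: False
          then have "q - 1 < length X" using F2 ql by auto
          then have "chn ofs X k ! (q - 1) = X ! (q - 1)"
            using chainX.INV_nth1[OF CX k, of "q - 1"] nP[of _ "q - 1"] F2 F3 by auto
          then show ?thesis using L R X'q F2 F3 by simp
        qed
      qed
    qed
  qed
qed

lemma chainX_map_eq:
  assumes CX: "chainX ofs eta X" and m: "\<And>j. 1 \<le> j \<Longrightarrow> j < eta \<Longrightarrow> map (dl (ofs+j)) X' = map (dl (ofs+j)) X"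
  shows "chainX ofs eta X'"
proof
  assume "2 \<le> eta"
  then show "nn (Suc ofs) X' \<and> hw (Suc ofs) X' = 1"
    using nn_map_eq[OF m[of 1]] chainX.pre1[OF CX] by simp
next
  fix j assume "2 \<le> j" "j < eta"
  then show "nn (ofs + j) X' \<and> hw (ofs + j) X' = 0"
    using nn_map_eq[OF m[of j]] chainX.pre2[OF CX] by simp
qed

lemma pp_map_eq:
  assumes CX: "chainX ofs eta X" and m: "\<And>j. 1 \<le> j \<Longrightarrow> j < eta \<Longrightarrow> map (dl (ofs+j)) X' = map (dl (ofs+j)) X"
    and k: "k < eta" and len: "length X' = length X"
  shows "\<forall>l. 1 \<le> l \<longrightarrow> l \<le> k \<longrightarrow> pp ofs X' l = pp ofs X l"
proof -
  have CX': "chainX ofs eta X'" by (rule chainX_map_eq[OF CX m])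
  have "\<forall>l. 1 \<le> l \<longrightarrow> l \<le> k \<longrightarrow> pp ofs X' l = id (pp ofs X l)"
  proof (rule chain_transfer[OF CX CX', where un=id and sh=id, OF _ _ _ _ k])
    fix j i assume "1 \<le> j" "j < eta" "i \<le> length X'"
    then show "hw (ofs + j) (take i X') = hw (ofs + j) (take (id i) X)" using hw_map_eq[OF m] by simp
  qed (use len in auto)
  then show ?thesis by simp
qed

lemma chn_comm:
  assumes CX1: "chainX o1 e1 X" and CX2: "chainX o2 e2 X" and disj: "o1 + e1 \<le> o2"
    and k1: "k1 < e1" and k2: "k2 < e2"
  shows "chn o1 (chn o2 X k2) k1 = chn o2 (chn o1 X k1) k2"
proof -
  let ?Y2 = "chn o2 X k2" and ?Y1 = "chn o1 X k1"
  have m2: "map (dl (o1+j)) ?Y2 = map (dl (o1+j)) X" if "1 \<le> j" "j < e1" for j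
    using chainX.other_brackets[OF CX2 k2, of "o1 + j"] that disj by simp
  have m1: "map (dl (o2+j)) ?Y1 = map (dl (o2+j)) X" if "1 \<le> j" "j < e2" for j
    using chainX.other_brackets[OF CX1 k1, of "o2 + j"] that disj by simp
  have l1: "length ?Y1 = length X" using chainX.INV_len[OF CX1 k1] .
  have l2: "length ?Y2 = length X" using chainX.INV_len[OF CX2 k2] .
  have CY2: "chainX o1 e1 ?Y2" by (rule chainX_map_eq[OF CX1 m2])
  have CY1: "chainX o2 e2 ?Y1" by (rule chainX_map_eq[OF CX2 m1])
  have p1: "\<forall>l. 1 \<le> l \<longrightarrow> l \<le> k1 \<longrightarrow> pp o1 ?Y2 l = pp o1 X l" by (rule pp_map_eq[OF CX1 m2 k1 l2])
  have p2: "\<forall>l. 1 \<le> l \<longrightarrow> l \<le> k2 \<longrightarrow> pp o2 ?Y1 l = pp o2 X l" by (rule pp_map_eq[OF CX2 m1 k2 l1])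
  have LL: "length (chn o1 ?Y2 k1) = length X" using chainX.INV_len[OF CY2 k1] l2 by simp
  have RL: "length (chn o2 ?Y1 k2) = length X" using chainX.INV_len[OF CY1 k2] l1 by simp
  show ?thesis
  proof (rule nth_equalityI)
    show "length (chn o1 ?Y2 k1) = length (chn o2 ?Y1 k2)" using LL RL by simp
  next
    fix q assume "q < length (chn o1 ?Y2 k1)"
    then have q: "q < length X" using LL by simp
    have disjP: False if "1 \<le> l" "l \<le> k1" "q = pp o1 X l" "1 \<le> l'" "l' \<le> k2" "q = pp o2 X l'" for l l'
    proof -
      have "X ! q = Suc (o1 + l)" using chainX.INV_P[OF CX1 k1 that(1,2)] that(3) by simp
      moreover have "X ! q = Suc (o2 + l')" using chainX.INV_P[OF CX2 k2 that(4,5)] that(6) by simp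
      ultimately show False using that k1 disj by simp
    qed
    consider (A) l where "1 \<le> l" "l \<le> k1" "q = pp o1 X l"
      | (B) l' where "1 \<le> l'" "l' \<le> k2" "q = pp o2 X l'"
      | (N) "\<forall>l. 1 \<le> l \<longrightarrow> l \<le> k1 \<longrightarrow> q \<noteq> pp o1 X l" "\<forall>l. 1 \<le> l \<longrightarrow> l \<le> k2 \<longrightarrow> q \<noteq> pp o2 X l"
      by blast
    then show "chn o1 ?Y2 k1 ! q = chn o2 ?Y1 k2 ! q"
    proof cases
      case A
      have "chn o1 ?Y2 k1 ! q = o1 + l" using chainX.INV_nth2[OF CY2 k1 A(1,2)] p1 A by simp
      moreover have "chn o2 ?Y1 k2 ! q = ?Y1 ! q"
        using chainX.INV_nth1[OF CY1 k2, of q] p2 q l1 disjP[OF A] by auto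
      moreover have "?Y1 ! q = o1 + l" using chainX.INV_nth2[OF CX1 k1 A(1,2)] A(3) by simp
      ultimately show ?thesis by simp
    next
      case B
      have "chn o2 ?Y1 k2 ! q = o2 + l'" using chainX.INV_nth2[OF CY1 k2 B(1,2)] p2 B by simp
      moreover have "chn o1 ?Y2 k1 ! q = ?Y2 ! q"
        using chainX.INV_nth1[OF CY2 k1, of q] p1 q l2 disjP[OF _ _ _ B] by auto
      moreover have "?Y2 ! q = o2 + l'" using chainX.INV_nth2[OF CX2 k2 B(1,2)] B(3) by simp
      ultimately show ?thesis by simp
    next
      case N
      have "chn o1 ?Y2 k1 ! q = ?Y2 ! q" using chainX.INV_nth1[OF CY2 k1, of q] p1 q l2 N by auto
      also have "\<dots> = X ! q" using chainX.INV_nth1[OF CX2 k2 q] N by auto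
      also have "\<dots> = ?Y1 ! q" using chainX.INV_nth1[OF CX1 k1 q] N by auto
      also have "\<dots> = chn o2 ?Y1 k2 ! q" using chainX.INV_nth1[OF CY1 k2, of q] p2 q l1 N by auto
      finally show ?thesis .
    qed
  qed
qed

lemma balB_snoc_chainX:
  assumes b: "balB ofs eta (W @ [Suc ofs])"
  shows "chainX ofs eta W"
proof
  assume "2 \<le> eta"
  then have "nn (Suc ofs) (W @ [Suc ofs]) \<and> hw (Suc ofs) (W @ [Suc ofs]) = 0"
    using b unfolding balB_def by (metis One_nat_def Suc_1 Suc_le_lessD add.right_neutral add_Suc_right le_refl)
  then show "nn (Suc ofs) W \<and> hw (Suc ofs) W = 1"
    using nn_snoc[of _ W "Suc ofs"] by (auto simp: dl_def)
next
  fix j assume j: "2 \<le> j" "j < eta"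
  then have "nn (ofs + j) (W @ [Suc ofs]) \<and> hw (ofs + j) (W @ [Suc ofs]) = 0"
    using b unfolding balB_def by auto
  moreover have "dl (ofs + j) (Suc ofs) = 0" using j by (auto simp: dl_def)
  ultimately show "nn (ofs + j) W \<and> hw (ofs + j) W = 0"
    using nn_snoc[of _ W "Suc ofs"] by auto
qed

context chainX begin

lemma last_letter_block:
  assumes X: "X = V @ [a]" and a: "ofs < a" "a \<le> ofs + eta"
  shows "a = Suc ofs \<or> a = Suc (Suc ofs)"
proof (rule ccontr)
  assume ne: "\<not> (a = Suc ofs \<or> a = Suc (Suc ofs))"
  define j where "j = a - Suc ofs"
  have j: "2 \<le> j" "j < eta" "Suc (ofs + j) = a" using ne a unfolding j_def by auto
  have "nn (ofs + j) X \<and> hw (ofs + j) X = 0" using pre2[OF j(1,2)] .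
  then have "hw (ofs + j) V \<ge> 0" "hw (ofs + j) V + 1 = 0"
    using nn_snoc[of _ V a] nn_final j(3) X by (auto simp: dl_def)
  then show False by simp
qed

lemma Cf_last:
  assumes X: "X = V @ [a]" and a: "a = Suc ofs \<or> a = Suc (Suc ofs)" and e: "1 \<le> eta" and ae: "a \<le> ofs + eta"
  shows "C (eta - 1) ! (length X - 1) = Suc ofs"
    and "a = Suc (Suc ofs) \<longleftrightarrow> (2 \<le> eta \<and> p 1 = length X - 1)"
proof -
  have n: "length X - 1 < length X" using X by simp
  have pos: "p 1 = length X - 1" if "a = Suc (Suc ofs)" "2 \<le> eta"
  proof -
    have P: "Pk (Suc ofs) (C 0) 0 (p 1)" using INV_P[of 1 1] that by simp
    have h: "nn (Suc ofs) X \<and> hw (Suc ofs) X = 1" using pre1 that by simp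
    have hv: "hw (Suc ofs) V = 0" using h X that by (simp add: dl_def)
    have "Pk (Suc ofs) X 0 (length X - 1)" unfolding Pk_def
    proof (intro conjI allI impI)
      show "length X - 1 < length X" by (rule n)
      show "hw (Suc ofs) (take (length X - 1) X) = int 0" using X hv by simp
      fix i assume "length X - 1 < i \<and> i \<le> length X"
      then have "i = length X" using X by auto
      then show "hw (Suc ofs) (take i X) > int 0" using h by simp
    qed
    then show ?thesis using P Pk_unique by simp
  qed
  have "p 1 = length X - 1 \<Longrightarrow> 2 \<le> eta \<Longrightarrow> a = Suc (Suc ofs)"
    using INV_P[of 1 1] X by simp
  then show "a = Suc (Suc ofs) \<longleftrightarrow> (2 \<le> eta \<and> p 1 = length X - 1)"
    using pos a ae by auto
  show "C (eta - 1) ! (length X - 1) = Suc ofs"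
  proof (cases "a = Suc ofs")
    case True
    have "\<forall>l. 1 \<le> l \<longrightarrow> l \<le> eta - 1 \<longrightarrow> length X - 1 \<noteq> p l"
    proof (intro allI impI)
      fix l assume l: "1 \<le> l" "l \<le> eta - 1"
      then have "X ! p l = Suc (ofs + l)" using INV_P[of "eta - 1" l] by simp
      moreover have "X ! (length X - 1) = Suc ofs" using X True by simp
      ultimately show "length X - 1 \<noteq> p l" using l by auto
    qed
    then show ?thesis using INV_nth1[of "eta - 1" "length X - 1"] n e X True by simp
  next
    case False
    then have a2: "a = Suc (Suc ofs)" using a by simp
    then have "2 \<le> eta" using ae by simp
    then show ?thesis using pos[OF a2] INV_nth2[of "eta - 1" 1] by simp
  qed
qed

end

context chainX begin

lemma Y_chainX:
  assumes X: "X = V @ [a]" and a: "a = Suc ofs \<or> a = Suc (Suc ofs)" and e: "1 \<le> eta" and ae: "a \<le> ofs + eta"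
  shows "chainX ofs eta ((ofs + eta) # butlast (C (eta - 1)))"
proof -
  have len: "length (C (eta - 1)) = length X" using INV_len[of "eta - 1"] e by simp
  have ne: "C (eta - 1) \<noteq> []" using len X by auto
  have "last (C (eta - 1)) = Suc ofs" using Cf_last(1)[OF X a e ae] ne len by (simp add: last_conv_nth)
  then have "C (eta - 1) = butlast (C (eta - 1)) @ [Suc ofs]" using ne by (metis append_butlast_last_id)
  then have "(ofs + eta) # C (eta - 1) = ((ofs + eta) # butlast (C (eta - 1))) @ [Suc ofs]" by simp
  moreover have "balB ofs eta ((ofs + eta) # C (eta - 1))" using post1 unfolding balB_def by blast
  ultimately show ?thesis using balB_snoc_chainX by metis
qed

lemma Yw:
  assumes "1 \<le> i" "i \<le> length X" and len: "length (C (eta - 1)) = length X"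
  shows "hw r (take i ((ofs + eta) # butlast (C (eta - 1)))) = dl r (ofs + eta) + hw r (take (i - 1) (C (eta - 1)))"
proof -
  have "take (i - 1) (butlast (C (eta - 1))) = take (i - 1) (C (eta - 1))"
    using assms by (simp add: take_butlast)
  then show ?thesis using assms by (simp add: hw_take_Cons)
qed

end

context chainX begin

lemma key_step:
  assumes X: "X = V @ [a]" and a: "a = Suc ofs \<or> a = Suc (Suc ofs)" and ae: "a \<le> ofs + eta"
    and jl: "Suc j < eta"
  defines "Y \<equiv> (ofs + eta) # butlast (C (eta - 1))"
  defines "Pv \<equiv> \<lambda>l. if l = eta then 0 else Suc (p l)"
  defines "Qv \<equiv> \<lambda>j. if j = 0 then length X else pp ofs Y j"
  shows "(Qv j \<le> Pv (Suc j)) \<longleftrightarrow> (Qv (Suc j) \<le> Pv (Suc (Suc j)))"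
proof -
  let ?n = "length X"
  let ?r = "ofs + Suc j"
  let ?q = "pp ofs Y"
  have e: "1 \<le> eta" using jl by simp
  have CY: "chainX ofs eta Y" unfolding Y_def by (rule Y_chainX[OF X a e ae])
  have lenC: "length (C (eta - 1)) = ?n" using INV_len[of "eta - 1"] e by simp
  have lenY: "length Y = ?n" unfolding Y_def using lenC X by simp
  define A where "A i = hw ?r (take i X)" for i
  define T where "T i = hw ?r (take i (chn ofs Y j))" for i
  have Ann: "A i \<ge> 0" if "i \<le> ?n" for i
    using Xnn[of "Suc j"] jl that unfolding A_def nn_def by simp
  have Pp: "Pk ?r (C j) 0 (p (Suc j))" and ppl: "p (Suc j) < ?n" and Xp: "X ! p (Suc j) = Suc ?r"
    using INV_P[of "Suc j" "Suc j"] jl by auto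
  have pmono1: "p (Suc j) < p j" if "1 \<le> j" using INV_mono[of "Suc j" j "Suc j"] jl that by simp
  have pmono2: "p (Suc (Suc j)) < p (Suc j)" if "Suc (Suc j) < eta" using INV_mono[of "Suc (Suc j)" "Suc j" "Suc (Suc j)"] that by simp
  have V: "hw ?r (take i (C j)) = A i + (if 1 \<le> j \<and> p j < i then 1 else 0)" for i
    using Vwalk[of "Suc j" i] jl unfolding A_def by simp
  have Vpos: "A i + (if 1 \<le> j \<and> p j < i then 1 else 0) > 0" if "p (Suc j) < i" "i \<le> ?n" for i
    using Pp that INV_len[of j] jl unfolding Pk_def V[symmetric] by auto
  have Ap0: "A (p (Suc j)) = 0"
  proof -
    have "hw ?r (take (p (Suc j)) (C j)) = 0" using Pp by (simp add: Pk_def)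
    then show ?thesis using V[of "p (Suc j)"] pmono1 by (auto split: if_splits)
  qed
  have Ap1: "A (Suc (p (Suc j))) = 1"
    using Ap0 hw_take_Suc[OF ppl, of ?r] Xp unfolding A_def by (simp add: dl_def)
  have Pq: "Pk ?r (chn ofs Y j) 0 (?q (Suc j))" and qql: "?q (Suc j) < ?n"
    using chainX.INV_P[OF CY, of "Suc j" "Suc j"] jl lenY by auto
  have qmono1: "?q (Suc j) < ?q j" if "1 \<le> j" using chainX.INV_mono[OF CY, of "Suc j" j "Suc j"] jl that by simp
  have qjl: "?q j < ?n" if "1 \<le> j" using chainX.INV_P[OF CY, of "Suc j" j] jl that lenY by simp
  have Tf: "T i = (if Suc (Suc j) = eta then 1 else 0) + A (i - 1)
      - (if p (Suc j) < i - 1 then 2 else 0)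
      + (if Suc (Suc j) < eta \<and> p (Suc (Suc j)) < i - 1 then 1 else 0)
      + (if 1 \<le> j \<and> p j < i - 1 then 1 else 0)
      + (if 1 \<le> j \<and> ?q j < i then 1 else 0)" if i: "1 \<le> i" "i \<le> ?n" for i
  proof -
    have "T i = hw ?r (take i Y) + corr ?q j (Suc j) i"
      unfolding T_def using chainX.INV_walk[OF CY, of j "Suc j" i] jl by simp
    also have "hw ?r (take i Y) = dl ?r (ofs + eta) + hw ?r (take (i - 1) (C (eta - 1)))"
      unfolding Y_def using Yw[OF i lenC] .
    also have "hw ?r (take (i - 1) (C (eta - 1))) = A (i - 1) + corr p (eta - 1) (Suc j) (i - 1)"
      unfolding A_def using INV_walk[of "eta - 1" "Suc j" "i - 1"] jl by simp
    finally show ?thesis using jl unfolding corr_def by (auto simp: dl_def)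
  qed
  have Tn: "T ?n = 1"
  proof -
    have "hw ?r Y = (if j = 0 then 1 else 0)"
      using chainX.pre1[OF CY] chainX.pre2[OF CY, of "Suc j"] jl by (cases j) auto
    moreover have "T ?n = hw ?r (take ?n Y) + corr ?q j (Suc j) ?n"
      unfolding T_def using chainX.INV_walk[OF CY, of j "Suc j" ?n] jl by simp
    ultimately show ?thesis using lenY qjl unfolding corr_def by (cases j) auto
  qed
  have Tq0: "T (?q (Suc j)) = 0" using Pq unfolding T_def Pk_def by simp
  have Tqpos: "T i > 0" if "?q (Suc j) < i" "i \<le> ?n" for i
    using Pq that chainX.INV_len[OF CY, of j] jl lenY unfolding T_def Pk_def by auto
  have PvS: "Pv (Suc j) = Suc (p (Suc j))" unfolding Pv_def using jl by simp
  have QvS: "Qv (Suc j) = ?q (Suc j)" unfolding Qv_def by simp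
  have E1: "(if Suc (Suc j) = eta then 1 else 0) + (if Suc (Suc j) < eta \<and> p (Suc (Suc j)) < i - 1 then 1 else (0::int)) = 1"
    if "Pv (Suc (Suc j)) < i" for i
    using that jl unfolding Pv_def by (auto split: if_splits)
  show ?thesis
  proof
    assume H: "Qv j \<le> Pv (Suc j)"
    show "Qv (Suc j) \<le> Pv (Suc (Suc j))"
    proof (rule ccontr)
      assume "\<not> Qv (Suc j) \<le> Pv (Suc (Suc j))"
      then have gt: "Pv (Suc (Suc j)) < ?q (Suc j)" using QvS by simp
      define i where "i = ?q (Suc j)"
      have i1: "1 \<le> i" "i \<le> ?n" using gt qql unfolding i_def by auto
      have T0: "T i = 0" using Tq0 unfolding i_def .
      have Ei: "(if Suc (Suc j) = eta then 1 else 0) + (if Suc (Suc j) < eta \<and> p (Suc (Suc j)) < i - 1 then 1 else (0::int)) = 1"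
        using E1 gt unfolding i_def by simp
      show False
      proof (cases "p (Suc j) < i - 1")
        case False
        have "A (i - 1) \<ge> 0" using Ann i1 by simp
        then have "T i \<ge> 1" using Tf[OF i1] Ei False by auto
        then show False using T0 by simp
      next
        case True
        then have "Pv (Suc j) < i" using PvS by simp
        then have "Qv j < i" using H by simp
        show False
        proof (cases "j = 0")
          case True
          then show False using \<open>Qv j < i\<close> qql unfolding Qv_def i_def by simp
        next
          case False
          then have j1: "1 \<le> j" by simp
          have qi: "?q j < i" using \<open>Qv j < i\<close> False unfolding Qv_def by simp
          have "A (i - 1) + (if 1 \<le> j \<and> p j < i - 1 then 1 else 0) > 0" using Vpos[OF True] i1 by simp
          then have "T i > 0" using Tf[OF i1] Ei True qi j1 by auto
          then show False using T0 by simp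
        qed
      qed
    qed
  next
    assume H: "Qv (Suc j) \<le> Pv (Suc (Suc j))"
    show "Qv j \<le> Pv (Suc j)"
    proof (rule ccontr)
      assume "\<not> Qv j \<le> Pv (Suc j)"
      then have gt: "Suc (p (Suc j)) < Qv j" using PvS by simp
      define i where "i = Suc (Suc (p (Suc j)))"
      have iQ: "i \<le> Qv j" using gt unfolding i_def by simp
      have in_: "i \<le> ?n"
      proof (cases "j = 0")
        case True then show ?thesis using iQ unfolding Qv_def by simp
      next
        case False then show ?thesis using iQ qjl unfolding Qv_def by simp
      qed
      have i1: "1 \<le> i" unfolding i_def by simp
      have PvSS: "Pv (Suc (Suc j)) < i"
        using pmono2 jl unfolding Pv_def i_def by (cases "Suc (Suc j) < eta") auto
      have Ei: "(if Suc (Suc j) = eta then 1 else 0) + (if Suc (Suc j) < eta \<and> p (Suc (Suc j)) < i - 1 then 1 else (0::int)) = 1"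
        using E1[OF PvSS] .
      have nqi: "\<not> (1 \<le> j \<and> ?q j < i)" using iQ unfolding Qv_def by auto
      have npj: "\<not> (1 \<le> j \<and> p j < i - 1)" using pmono1 unfolding i_def by auto
      have "T i = 0" using Tf[OF i1 in_] Ei nqi npj Ap1 unfolding i_def by simp
      then have ilt: "i < ?n" using Tn in_ by (cases "i = ?n") auto
      have "\<not> ?q (Suc j) < i" using Tqpos[of i] ilt \<open>T i = 0\<close> by auto
      then have "Pv (Suc (Suc j)) < Qv (Suc j)" using PvSS QvS by simp
      then show False using H by simp
    qed
  qed
qed

end

context chainX begin

lemma key:
  assumes X: "X = V @ [a]" and a: "a = Suc ofs \<or> a = Suc (Suc ofs)" and ae: "a \<le> ofs + eta" and e: "1 \<le> eta"
  shows "chn ofs ((ofs + eta) # butlast (C (eta - 1))) (eta - 1) ! 0 =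
           (if a = Suc (Suc ofs) then ofs + eta - 1 else ofs + eta)"
proof (cases "eta = 1")
  case True
  then have "a = Suc ofs" using a ae by auto
  then show ?thesis using True by simp
next
  case False
  then have e2: "2 \<le> eta" using e by simp
  define Y where "Y = (ofs + eta) # butlast (C (eta - 1))"
  define Pv where "Pv = (\<lambda>l. if l = eta then 0 else Suc (p l))"
  define Qv where "Qv = (\<lambda>j. if j = 0 then length X else pp ofs Y j)"
  have CY: "chainX ofs eta Y" unfolding Y_def by (rule Y_chainX[OF X a e ae])
  have lenC: "length (C (eta - 1)) = length X" using INV_len[of "eta - 1"] e by simp
  have lenY: "length Y = length X" unfolding Y_def using lenC X by simp
  have ind: "j < eta \<Longrightarrow> (Qv j \<le> Pv (Suc j) \<longleftrightarrow> Qv 0 \<le> Pv 1)" for j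
  proof (induction j)
    case 0 then show ?case by simp
  next
    case (Suc j)
    have "(Qv j \<le> Pv (Suc j)) \<longleftrightarrow> (Qv (Suc j) \<le> Pv (Suc (Suc j)))"
      using key_step[OF X a ae Suc.prems] unfolding Y_def Pv_def Qv_def by simp
    then show ?case using Suc by simp
  qed
  have p1: "p 1 < length X" using INV_P[of 1 1] e2 by simp
  have base: "Qv 0 \<le> Pv 1 \<longleftrightarrow> a = Suc (Suc ofs)"
    using Cf_last(2)[OF X a e ae] e2 p1 unfolding Qv_def Pv_def by auto
  have fin: "Qv (eta - 1) \<le> Pv eta \<longleftrightarrow> pp ofs Y (eta - 1) = 0"
    using e2 unfolding Qv_def Pv_def by auto
  have qz: "pp ofs Y (eta - 1) = 0 \<longleftrightarrow> a = Suc (Suc ofs)"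
    using ind[of "eta - 1"] e2 base fin by simp
  have ql: "pp ofs Y (eta - 1) < length X" using chainX.INV_P[OF CY, of "eta - 1" "eta - 1"] e2 lenY by simp
  have Y0: "Y ! 0 = ofs + eta" unfolding Y_def by simp
  show ?thesis
  proof (cases "a = Suc (Suc ofs)")
    case True
    then have "pp ofs Y (eta - 1) = 0" using qz by simp
    then have "chn ofs Y (eta - 1) ! 0 = ofs + (eta - 1)"
      using chainX.INV_nth2[OF CY, of "eta - 1" "eta - 1"] e2 by simp
    then show ?thesis using True e2 unfolding Y_def by simp
  next
    case F: False
    then have q0: "pp ofs Y (eta - 1) \<noteq> 0" using qz by simp
    have "\<forall>l. 1 \<le> l \<longrightarrow> l \<le> eta - 1 \<longrightarrow> 0 \<noteq> pp ofs Y l"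
    proof (intro allI impI)
      fix l assume l: "1 \<le> l" "l \<le> eta - 1"
      show "0 \<noteq> pp ofs Y l"
      proof (cases "l = eta - 1")
        case True then show ?thesis using q0 by simp
      next
        case False
        then have "pp ofs Y (eta - 1) < pp ofs Y l" using chainX.INV_mono[OF CY, of "eta - 1" l "eta - 1"] l e2 by simp
        then show ?thesis by simp
      qed
    qed
    then have "chn ofs Y (eta - 1) ! 0 = Y ! 0"
      using chainX.INV_nth1[OF CY, of "eta - 1" 0] e2 lenY X by simp
    then show ?thesis using F Y0 unfolding Y_def by simp
  qed
qed

end

definition nnc :: "nat \<Rightarrow> int \<Rightarrow> nat list \<Rightarrow> bool" where
  "nnc r c w = (\<forall>k\<le>length w. c + hw r (take k w) \<ge> 0)"

lemma nnc_Nil[simp]: "nnc r c [] = (c \<ge> 0)" by (simp add: nnc_def)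

lemma nnc_Cons[simp]: "nnc r c (a # w) = (c \<ge> 0 \<and> nnc r (c + dl r a) w)"
  unfolding nnc_def
proof
  assume h: "\<forall>k\<le>length (a # w). c + hw r (take k (a # w)) \<ge> 0"
  have "c \<ge> 0" using h[rule_format, of 0] by simp
  moreover have "\<forall>k\<le>length w. c + dl r a + hw r (take k w) \<ge> 0"
  proof (intro allI impI)
    fix k assume "k \<le> length w"
    then show "c + dl r a + hw r (take k w) \<ge> 0" using h[rule_format, of "Suc k"] by (simp add: add.assoc)
  qed
  ultimately show "c \<ge> 0 \<and> (\<forall>k\<le>length w. c + dl r a + hw r (take k w) \<ge> 0)" by simp
next
  assume h: "c \<ge> 0 \<and> (\<forall>k\<le>length w. c + dl r a + hw r (take k w) \<ge> 0)"
  show "\<forall>k\<le>length (a # w). c + hw r (take k (a # w)) \<ge> 0"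
  proof (intro allI impI)
    fix k assume k: "k \<le> length (a # w)"
    show "c + hw r (take k (a # w)) \<ge> 0"
    proof (cases k)
      case 0 then show ?thesis using h by simp
    next
      case (Suc k') then show ?thesis using h k by (simp add: add.assoc)
    qed
  qed
qed

lemma nn_nnc: "nn r w = nnc r 0 w" by (simp add: nn_def nnc_def)

lemma nnc_nonneg: "nnc r c w \<Longrightarrow> c \<ge> 0"
  using nnc_def[of r c w] by (metis add.right_neutral hw_simps(1) le0 take0)

lemma nnc_append: "nnc r c (u @ w) = (nnc r c u \<and> nnc r (c + hw r u) w)"
  by (induction u arbitrary: c) (auto simp: add.assoc dest: nnc_nonneg)

lemma nnc_filter:
  assumes "P r" "P (Suc r)"
  shows "nnc r c (filter P w) = nnc r c w \<and> hw r (filter P w) = hw r w"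
proof (induction w arbitrary: c)
  case Nil then show ?case by simp
next
  case (Cons a w)
  show ?case
  proof (cases "P a")
    case True then show ?thesis using Cons by simp
  next
    case False
    then have d: "dl r a = 0" using assms by (auto simp: dl_def)
    have "c' \<ge> 0" if "nnc r c' w" for c' using that[unfolded nnc_def, rule_format, of 0] by simp
    then show ?thesis using Cons False d by auto
  qed
qed

lemma nn_mid:
  assumes "\<And>c. c \<ge> 0 \<Longrightarrow> nnc r c m1 = nnc r c m2" and "hw r m1 = hw r m2"
  shows "nn r (u @ m1 @ w) = nn r (u @ m2 @ w) \<and> hw r (u @ m1 @ w) = hw r (u @ m2 @ w)"
proof -
  have "nnc r 0 u \<Longrightarrow> hw r u \<ge> 0" unfolding nnc_def by (metis add_0 order_refl take_all)
  then show ?thesis unfolding nn_nnc nnc_append using assms by auto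
qed

lemma knuth_step_bal:
  assumes "knuth_step v v'"
  shows "nn r v = nn r v' \<and> hw r v = hw r v'"
  using assms
proof cases
  case (K1 x y z u w)
  have key: "c \<ge> 0 \<Longrightarrow> nnc r c [y, x, z] = nnc r c [y, z, x]" for c
    using K1(3,4) by (auto simp: dl_def split: if_splits)
  show ?thesis unfolding K1(1,2) by (rule nn_mid) (use key in auto)
next
  case (K2 x y z u w)
  have key: "c \<ge> 0 \<Longrightarrow> nnc r c [x, z, y] = nnc r c [z, x, y]" for c
    using K2(3,4) by (auto simp: dl_def split: if_splits)
  show ?thesis unfolding K2(1,2) by (rule nn_mid) (use key in auto)
qed

lemma knuth_equiv_bal:
  assumes "v \<sim>\<^sub>K v'"
  shows "nn r v = nn r v' \<and> hw r v = hw r v'"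
proof -
  have "(symclp knuth_step)\<^sup>*\<^sup>* v v'" using assms unfolding knuth_equiv_def equivclp_def .
  then show ?thesis
  proof (induction rule: rtranclp_induct)
    case base then show ?case by simp
  next
    case (step b c)
    from step.hyps(2) have "nn r b = nn r c \<and> hw r b = hw r c"
      unfolding symclp_def using knuth_step_bal by (metis)
    then show ?case using step.IH by simp
  qed
qed

lemma nnc_replicate: "nnc r c (replicate n a) = (\<forall>k\<le>n. c + int k * dl r a \<ge> 0)"
proof (induction n arbitrary: c)
  case 0 then show ?case by simp
next
  case (Suc n)
  have "nnc r c (replicate (Suc n) a) = (c \<ge> 0 \<and> (\<forall>k\<le>n. c + dl r a + int k * dl r a \<ge> 0))"
    using Suc by simp
  also have "\<dots> = (\<forall>k\<le>Suc n. c + int k * dl r a \<ge> 0)"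
  proof
    assume h: "c \<ge> 0 \<and> (\<forall>k\<le>n. c + dl r a + int k * dl r a \<ge> 0)"
    show "\<forall>k\<le>Suc n. c + int k * dl r a \<ge> 0"
    proof (intro allI impI)
      fix k assume "k \<le> Suc n"
      then show "c + int k * dl r a \<ge> 0" using h by (cases k) (auto simp: algebra_simps)
    qed
  next
    assume h: "\<forall>k\<le>Suc n. c + int k * dl r a \<ge> 0"
    show "c \<ge> 0 \<and> (\<forall>k\<le>n. c + dl r a + int k * dl r a \<ge> 0)"
      using h[rule_format, of 0] h[rule_format, of "Suc _"] by (auto simp: algebra_simps)
  qed
  finally show ?case .
qed

lemma hw_replicate: "hw r (replicate n a) = int n * dl r a"
  by (induction n) (auto simp: algebra_simps)

lemma wordY_filter:
  assumes j: "1 \<le> j" "j < rect_rows R i"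
  shows "filter (\<lambda>a. a \<in> {offset R i + j, Suc (offset R i + j)}) (wordY R i) =
     replicate (rect_cols R i) (Suc (offset R i + j)) @ replicate (rect_cols R i) (offset R i + j)"
proof -
  let ?o = "offset R i" and ?e = "rect_rows R i" and ?m = "rect_cols R i"
  let ?P = "\<lambda>a. a \<in> {?o + j, Suc (?o + j)}"
  have L: "[1..<?e + 1] = [1..<j] @ [j, Suc j] @ [Suc (Suc j)..<?e + 1]"
  proof -
    have "[1..<?e + 1] = [1..<j] @ [j..<?e + 1]" using j upt_add_eq_append[of 1 j "?e + 1 - j"] by simp
    moreover have "[j..<?e + 1] = [j, Suc j] @ [Suc (Suc j)..<?e + 1]" using j
      by (simp add: upt_conv_Cons)
    ultimately show ?thesis by simp
  qed
  have z1: "filter ?P (concat (map (\<lambda>k. replicate ?m (?o + k)) (rev [1..<j]))) = []"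
    by (auto simp: filter_empty_conv)
  have z2: "filter ?P (concat (map (\<lambda>k. replicate ?m (?o + k)) (rev [Suc (Suc j)..<?e + 1]))) = []"
    by (auto simp: filter_empty_conv)
  show ?thesis unfolding wordY_def L using z1 z2 by simp
qed

lemma WR_balR: "w \<in> WR R \<Longrightarrow> balR R w"
  unfolding balR_def balB_def
proof (intro allI impI)
  fix i j assume w: "w \<in> WR R" and il: "i < length R" and j: "1 \<le> j" "j < rect_rows R i"
  let ?o = "offset R i" and ?m = "rect_cols R i"
  let ?r = "?o + j"
  have K: "restrict_word w (block R i) \<sim>\<^sub>K wordY R i" using w il unfolding WR_def by auto
  have inB: "?r \<in> block R i" "Suc ?r \<in> block R i" using j unfolding block_def by auto
  have f1: "nn ?r w = nn ?r (restrict_word w (block R i)) \<and> hw ?r w = hw ?r (restrict_word w (block R i))"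
    using nnc_filter[of "\<lambda>a. a \<in> block R i" ?r 0 w] inB unfolding restrict_word_def nn_nnc by simp
  have f2: "nn ?r (wordY R i) = nn ?r (filter (\<lambda>a. a \<in> {?r, Suc ?r}) (wordY R i)) \<and>
      hw ?r (wordY R i) = hw ?r (filter (\<lambda>a. a \<in> {?r, Suc ?r}) (wordY R i))"
    using nnc_filter[of "\<lambda>a. a \<in> {?r, Suc ?r}" ?r 0 "wordY R i"] unfolding nn_nnc by simp
  have f3: "nn ?r (replicate ?m (Suc ?r) @ replicate ?m ?r) \<and> hw ?r (replicate ?m (Suc ?r) @ replicate ?m ?r) = 0"
    unfolding nn_nnc nnc_append nnc_replicate hw_replicate by (auto simp: dl_def hw_replicate)
  show "nn ?r w \<and> hw ?r w = 0"
    using f1 f2 f3 knuth_equiv_bal[OF K, of ?r] wordY_filter[OF j] by simp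
qed

lemma knuth_step_equiv: "knuth_step a b \<Longrightarrow> a \<sim>\<^sub>K b"
  unfolding knuth_equiv_def equivclp_def by (rule r_into_rtranclp) (simp add: symclp_def)

lemma ins_nn:
  assumes "k0 \<le> length X" "dl r a = 0"
  shows "nn r (ins k0 a X) = nn r X \<and> hw r (ins k0 a X) = hw r X"
proof -
  have p: "nnc r 0 u \<Longrightarrow> hw r u \<ge> 0" for u unfolding nnc_def by (metis add_0 order_refl take_all)
  define u where "u = take k0 X"
  define w where "w = drop k0 X"
  have e1: "ins k0 a X = u @ a # w" unfolding u_def w_def by (simp add: ins_def)
  have e2: "X = u @ w" unfolding u_def w_def by simp
  have "nnc r 0 (u @ a # w) = (nnc r 0 u \<and> nnc r (hw r u) (a # w))" using nnc_append[of r 0 u "a # w"] by simp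
  also have "\<dots> = (nnc r 0 u \<and> nnc r (hw r u) w)" using assms(2) p by auto
  also have "\<dots> = nnc r 0 (u @ w)" using nnc_append[of r 0 u w] by simp
  finally have A: "nnc r 0 (ins k0 a X) = nnc r 0 X" using e1 e2 by simp
  have B: "hw r (ins k0 a X) = hw r X" using assms(2) e1 e2 by simp
  show ?thesis unfolding nn_nnc using A B by simp
qed

lemma chainX_del:
  assumes CX: "chainX ofs eta (ins k0 a X)" and k0: "k0 \<le> length X"
    and a: "\<And>j. 1 \<le> j \<Longrightarrow> j < eta \<Longrightarrow> dl (ofs + j) a = 0"
  shows "chainX ofs eta X"
proof
  assume "2 \<le> eta"
  then show "nn (Suc ofs) X \<and> hw (Suc ofs) X = 1"
    using ins_nn[OF k0 a[of 1]] chainX.pre1[OF CX] by simp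
next
  fix j assume "2 \<le> j" "j < eta"
  then show "nn (ofs + j) X \<and> hw (ofs + j) X = 0"
    using ins_nn[OF k0 a[of j]] chainX.pre2[OF CX] by simp
qed

lemma ins_0: "ins 0 a X = a # X" by (simp add: ins_def)
lemma ins_end: "ins (length X) a X = X @ [a]" by (simp add: ins_def)
lemma ins_1: "ins 1 a (b # X) = b # a # X" by (simp add: ins_def)

lemma neutral_block:
  assumes "i' \<noteq> i" "offset R i < a" "a \<le> offset R i + rect_rows R i" "1 \<le> j" "j < rect_rows R i'"
  shows "dl (offset R i' + j) a = 0"
  using other_block_letter[OF assms(1), of R "offset R i' + j" a] assms by simp

lemma offset_strict: "\<forall>i<length R. 1 \<le> rect_rows R i \<Longrightarrow> i < j \<Longrightarrow> i < length R \<Longrightarrow> offset R i < offset R j"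
  using offset_lt[of i j R] by fastforce

lemma offset_inj: "\<forall>i<length R. 1 \<le> rect_rows R i \<Longrightarrow> i < length R \<Longrightarrow> j < length R \<Longrightarrow>
   offset R i = offset R j \<Longrightarrow> i = j"
  by (metis linorder_neqE_nat offset_strict order_less_irrefl)

lemma block_pres:
  assumes CX: "chainX (offset R i0) (rect_rows R i0) X" and k: "k < rect_rows R i0"
    and q: "q < length X" and b: "offset R i' < X ! q" "X ! q \<le> offset R i' + rect_rows R i'"
  shows "offset R i' < chn (offset R i0) X k ! q \<and> chn (offset R i0) X k ! q \<le> offset R i' + rect_rows R i'"
proof (cases "\<exists>l. 1 \<le> l \<and> l \<le> k \<and> q = pp (offset R i0) X l")
  case True
  then obtain l where l: "1 \<le> l" "l \<le> k" "q = pp (offset R i0) X l" by blast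
  have c: "chn (offset R i0) X k ! q = offset R i0 + l" using chainX.INV_nth2[OF CX k l(1,2)] l(3) by simp
  have xq: "X ! q = Suc (offset R i0 + l)" using chainX.INV_P[OF CX k l(1,2)] l(3) by simp
  have "offset R i0 < X ! q" "X ! q \<le> offset R i0 + rect_rows R i0" using xq l k by auto
  then have "i' = i0" using block_unique[OF b] by blast
  then show ?thesis using c xq b l k by simp
next
  case False
  then show ?thesis using chainX.INV_nth1[OF CX k q] b by auto
qed

lemma chi3: "(chi R ^^ 3) w = chi R (chi R (chi R w))"
  by (simp add: numeral_3_eq_3)

lemma balR_knuth: "knuth_step v v' \<Longrightarrow> balR R v \<Longrightarrow> balR R v'"
  unfolding balR_def balB_def using knuth_step_bal by metis

theorem lemma5p9:
  fixes R :: "(nat \<times> nat) list" and u :: "nat list" and x y z :: nat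
  assumes "\<forall>i<length R. rect_rows R i \<ge> 1 \<and> rect_cols R i \<ge> 1"
    and "x < y" and "y \<le> z"
    and "u @ [y, x, z] \<in> WR R"
  shows "(chi R ^^ 3) (u @ [y, x, z]) \<sim>\<^sub>K (chi R ^^ 3) (u @ [y, z, x])"
proof -
  note xy = assms(2) and yz = assms(3)
  have rows: "\<forall>i<length R. 1 \<le> rect_rows R i" using assms(1) by simp
  define t where "t = u @ [y, x, z]"
  define t' where "t' = u @ [y, z, x]"
  define N where "N = total_n R"
  have bt: "balR R t" using WR_balR assms(4) unfolding t_def by simp
  have st: "set t \<subseteq> {1..N}" using assms(4) unfolding t_def WR_def N_def by simp
  have ks: "knuth_step t t'" unfolding t_def t'_def using K1[OF xy yz, of u "[]"] by simp
  have bt': "balR R t'" using balR_knuth[OF ks bt] .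
  have st': "set t' \<subseteq> {1..N}" using st unfolding t_def t'_def by auto
  have lt: "last t = z" "butlast t = u @ [y, x]" "t \<noteq> []" unfolding t_def by (simp_all add: butlast_append)
  obtain iz where izl: "iz < length R" and zl: "z = Suc (offset R iz)" and Mz1: "MR R iz (u @ [y, x])"
    and c1: "chi R t = (offset R iz + rect_rows R iz) # chn (offset R iz) (u @ [y, x]) (rect_rows R iz - 1)"
    using chi_step[OF rows bt st[unfolded N_def] lt(3)] unfolding lt(1,2) by blast
  have lt': "last t' = x" "butlast t' = u @ [y, z]" "t' \<noteq> []" unfolding t'_def by (simp_all add: butlast_append)
  obtain ix where ixl: "ix < length R" and xl: "x = Suc (offset R ix)" and Mx1: "MR R ix (u @ [y, z])"
    and c1': "chi R t' = (offset R ix + rect_rows R ix) # chn (offset R ix) (u @ [y, z]) (rect_rows R ix - 1)"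
    using chi_step[OF rows bt' st'[unfolded N_def] lt'(3)] unfolding lt'(1,2) by blast
  define oz where "oz = offset R iz"
  define ez where "ez = rect_rows R iz"
  define ox where "ox = offset R ix"
  define ex where "ex = rect_rows R ix"
  define Mz where "Mz = oz + ez"
  define Mx where "Mx = ox + ex"
  have ez1: "1 \<le> ez" using rows izl unfolding ez_def by simp
  have ex1: "1 \<le> ex" using rows ixl unfolding ex_def by simp
  have ixz: "ix < iz"
  proof (rule ccontr)
    assume "\<not> ix < iz"
    then have "iz \<le> ix" by simp
    then have "offset R iz \<le> offset R ix" by (rule offset_mono)
    then show False using xl zl xy yz by simp
  qed
  have disj: "ox + ex \<le> oz" using offset_lt[OF ixz, of R] unfolding ox_def ex_def oz_def by simp
  have nxz: "ix \<noteq> iz" using ixz by simp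
  have neu_z: "\<And>j. 1 \<le> j \<Longrightarrow> j < ez \<Longrightarrow> dl (oz + j) a = 0" if "ox < a" "a \<le> ox + ex" for a
    using neutral_block[OF nxz[symmetric], of R a] that unfolding ox_def ex_def oz_def ez_def by auto
  have neu_x: "\<And>j. 1 \<le> j \<Longrightarrow> j < ex \<Longrightarrow> dl (ox + j) a = 0" if "oz < a" "a \<le> oz + ez" for a
    using neutral_block[OF nxz, of R a] that unfolding ox_def ex_def oz_def ez_def by auto
  have CXz1: "chainX oz ez (u @ [y, x])" using Mz1 unfolding MR_def oz_def ez_def by simp
  have CXx1: "chainX ox ex (u @ [y, z])" using Mx1 unfolding MR_def ox_def ex_def by simp
  have e_uyx: "u @ [y, x] = ins (length (u @ [y])) x (u @ [y])" using ins_end[of "u @ [y]" x] by simp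
  have e_uyz: "u @ [y, z] = ins (length (u @ [y])) z (u @ [y])" using ins_end[of "u @ [y]" z] by simp
  have xinx: "ox < x" "x \<le> ox + ex" using xl ex1 unfolding ox_def by auto
  have zinz: "oz < z" "z \<le> oz + ez" using zl ez1 unfolding oz_def by auto
  have CXz: "chainX oz ez (u @ [y])"
    using chainX_del[of oz ez "length (u @ [y])" x "u @ [y]"] CXz1 e_uyx neu_z[OF xinx] by simp
  have CXx: "chainX ox ex (u @ [y])"
    using chainX_del[of ox ex "length (u @ [y])" z "u @ [y]"] CXx1 e_uyz neu_x[OF zinz] by simp
  define A where "A = chn oz (u @ [y]) (ez - 1)"
  define B where "B = chn ox (u @ [y]) (ex - 1)"
  have lA: "length A = length (u @ [y])" using chainX.INV_len[OF CXz, of "ez - 1"] ez1 unfolding A_def by simp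
  have lB: "length B = length (u @ [y])" using chainX.INV_len[OF CXx, of "ex - 1"] ex1 unfolding B_def by simp
  have cA: "chn oz (u @ [y, x]) (ez - 1) = A @ [x]"
  proof -
    have "chn oz (ins (length (u @ [y])) x (u @ [y])) (ez - 1) = ins (length (u @ [y])) x A"
      unfolding A_def using chn_ins[OF CXz, of "length (u @ [y])" x "ez - 1"] neu_z[OF xinx] ez1 by simp
    moreover have "ins (length (u @ [y])) x A = A @ [x]" using lA ins_end[of A x] by simp
    ultimately show ?thesis using e_uyx by simp
  qed
  have cB: "chn ox (u @ [y, z]) (ex - 1) = B @ [z]"
  proof -
    have "chn ox (ins (length (u @ [y])) z (u @ [y])) (ex - 1) = ins (length (u @ [y])) z B"
      unfolding B_def using chn_ins[OF CXx, of "length (u @ [y])" z "ex - 1"] neu_x[OF zinz] ex1 by simp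
    moreover have "ins (length (u @ [y])) z B = B @ [z]" using lB ins_end[of B z] by simp
    ultimately show ?thesis using e_uyz by simp
  qed
  have c1a: "chi R t = Mz # A @ [x]" using c1 cA unfolding Mz_def oz_def ez_def by simp
  have c1a': "chi R t' = Mx # B @ [z]" using c1' cB unfolding Mx_def ox_def ex_def by simp
  have sN: "\<And>w. set w \<subseteq> {1..N} \<Longrightarrow> set w \<subseteq> {1..total_n R}" unfolding N_def by simp
  have P1: "balR R (chi R t) \<and> set (chi R t) \<subseteq> {1..N}"
  proof -
    have "set (u @ [y, x]) \<subseteq> {1..total_n R}" using st unfolding t_def N_def by auto
    from chi_props[OF rows Mz1 this] show ?thesis unfolding c1 N_def by simp
  qed
  have P1': "balR R (chi R t') \<and> set (chi R t') \<subseteq> {1..N}"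
  proof -
    have "set (u @ [y, z]) \<subseteq> {1..total_n R}" using st' unfolding t'_def N_def by auto
    from chi_props[OF rows Mx1 this] show ?thesis unfolding c1' N_def by simp
  qed
  have l2: "last (chi R t) = x" "butlast (chi R t) = Mz # A" "chi R t \<noteq> []"
    unfolding c1a by (simp_all add: butlast_append)
  obtain i2 where i2l: "i2 < length R" and x2: "x = Suc (offset R i2)" and M2: "MR R i2 (Mz # A)"
    and c2: "chi R (chi R t) = (offset R i2 + rect_rows R i2) # chn (offset R i2) (Mz # A) (rect_rows R i2 - 1)"
    using chi_step[OF rows conjunct1[OF P1] sN[OF conjunct2[OF P1]] l2(3)] unfolding l2(1,2) by blast
  have "i2 = ix" using offset_inj[OF rows i2l ixl] x2 xl by simp
  then have M2x: "MR R ix (Mz # A)" and c2x: "chi R (chi R t) = Mx # chn ox (Mz # A) (ex - 1)"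
    using M2 c2 unfolding Mx_def ox_def ex_def by auto
  have l2': "last (chi R t') = z" "butlast (chi R t') = Mx # B" "chi R t' \<noteq> []"
    unfolding c1a' by (simp_all add: butlast_append)
  obtain i2' where i2l': "i2' < length R" and z2: "z = Suc (offset R i2')" and M2': "MR R i2' (Mx # B)"
    and c2': "chi R (chi R t') = (offset R i2' + rect_rows R i2') # chn (offset R i2') (Mx # B) (rect_rows R i2' - 1)"
    using chi_step[OF rows conjunct1[OF P1'] sN[OF conjunct2[OF P1']] l2'(3)] unfolding l2'(1,2) by blast
  have "i2' = iz" using offset_inj[OF rows i2l' izl] z2 zl by simp
  then have M2z: "MR R iz (Mx # B)" and c2z: "chi R (chi R t') = Mz # chn oz (Mx # B) (ez - 1)"
    using M2' c2' unfolding Mz_def oz_def ez_def by auto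
  have Mzin: "oz < Mz" "Mz \<le> oz + ez" unfolding Mz_def using ez1 by auto
  have Mxin: "ox < Mx" "Mx \<le> ox + ex" unfolding Mx_def using ex1 by auto
  have CXxMA: "chainX ox ex (Mz # A)" using M2x unfolding MR_def ox_def ex_def by simp
  have CXxA: "chainX ox ex A"
    using chainX_del[of ox ex 0 Mz A] CXxMA neu_x[OF Mzin] by (simp add: ins_0)
  have CXzMB: "chainX oz ez (Mx # B)" using M2z unfolding MR_def oz_def ez_def by simp
  have CXzB: "chainX oz ez B"
    using chainX_del[of oz ez 0 Mx B] CXzMB neu_z[OF Mxin] by (simp add: ins_0)
  define D where "D = chn ox A (ex - 1)"
  have cMA: "chn ox (Mz # A) (ex - 1) = Mz # D"
    using chn_ins[OF CXxA, of 0 Mz "ex - 1"] neu_x[OF Mzin] ex1 unfolding D_def by (simp add: ins_0)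
  have comm: "chn oz B (ez - 1) = D"
    using chn_comm[OF CXx CXz disj, of "ex - 1" "ez - 1"] ex1 ez1 unfolding D_def A_def B_def by simp
  have cMB: "chn oz (Mx # B) (ez - 1) = Mx # D"
    using chn_ins[OF CXzB, of 0 Mx "ez - 1"] neu_z[OF Mxin] ez1 comm by (simp add: ins_0)
  have c2a: "chi R (chi R t) = Mx # Mz # D" using c2x cMA by simp
  have c2a': "chi R (chi R t') = Mz # Mx # D" using c2z cMB by simp
  have P2: "balR R (chi R (chi R t)) \<and> set (chi R (chi R t)) \<subseteq> {1..N}"
  proof -
    have "set (Mz # A) \<subseteq> {1..total_n R}" using P1 unfolding c1a N_def by auto
    from chi_props[OF rows M2x this] show ?thesis using c2x unfolding Mx_def ox_def ex_def N_def by simp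
  qed
  have P2': "balR R (chi R (chi R t')) \<and> set (chi R (chi R t')) \<subseteq> {1..N}"
  proof -
    have "set (Mx # B) \<subseteq> {1..total_n R}" using P1' unfolding c1a' N_def by auto
    from chi_props[OF rows M2z this] show ?thesis using c2z unfolding Mz_def oz_def ez_def N_def by simp
  qed
  have lenD: "length D = Suc (length u)" using chainX.INV_len[OF CXxA, of "ex - 1"] ex1 lA unfolding D_def by simp
  define D' where "D' = butlast D"
  define d where "d = last D"
  have Dsplit: "D = D' @ [d]" unfolding D'_def d_def using lenD by (metis append_butlast_last_id list.size(3) nat.distinct(1))
  have l3: "last (chi R (chi R t)) = d" "butlast (chi R (chi R t)) = Mx # Mz # D'" "chi R (chi R t) \<noteq> []"
    unfolding c2a using Dsplit by (simp_all add: butlast_append)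
  have l3': "last (chi R (chi R t')) = d" "butlast (chi R (chi R t')) = Mz # Mx # D'" "chi R (chi R t') \<noteq> []"
    unfolding c2a' using Dsplit by (simp_all add: butlast_append)
  obtain i3 where i3l: "i3 < length R" and d3: "d = Suc (offset R i3)" and M3: "MR R i3 (Mx # Mz # D')"
    and c3: "chi R (chi R (chi R t)) = (offset R i3 + rect_rows R i3) # chn (offset R i3) (Mx # Mz # D') (rect_rows R i3 - 1)"
    using chi_step[OF rows conjunct1[OF P2] sN[OF conjunct2[OF P2]] l3(3)] unfolding l3(1,2) by blast
  obtain i3' where i3l': "i3' < length R" and d3': "d = Suc (offset R i3')" and M3': "MR R i3' (Mz # Mx # D')"
    and c3': "chi R (chi R (chi R t')) = (offset R i3' + rect_rows R i3') # chn (offset R i3') (Mz # Mx # D') (rect_rows R i3' - 1)"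
    using chi_step[OF rows conjunct1[OF P2'] sN[OF conjunct2[OF P2']] l3'(3)] unfolding l3'(1,2) by blast
  have "i3' = i3" using offset_inj[OF rows i3l' i3l] d3 d3' by simp
  then have M3': "MR R i3 (Mz # Mx # D')"
    and c3': "chi R (chi R (chi R t')) = (offset R i3 + rect_rows R i3) # chn (offset R i3) (Mz # Mx # D') (rect_rows R i3 - 1)"
    using M3' c3' by auto
  have "y \<in> set t" unfolding t_def by simp
  then have y1: "0 < y" "y \<le> offset R (length R)" using st total_offset[of R] unfolding N_def by auto
  obtain iy where iyl: "iy < length R" and yin: "offset R iy < y" "y \<le> offset R iy + rect_rows R iy"
    using block_exists[OF y1] by blast
  have dD: "d = D ! length u" unfolding d_def using lenD by (subst last_conv_nth) auto
  have Ain: "offset R iy < A ! length u \<and> A ! length u \<le> offset R iy + rect_rows R iy"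
    using block_pres[OF CXz[unfolded oz_def ez_def], of "ez - 1" "length u" iy] yin ez1 unfolding A_def oz_def ez_def by simp
  have din: "offset R iy < d \<and> d \<le> offset R iy + rect_rows R iy"
    using block_pres[OF CXxA[unfolded ox_def ex_def], of "ex - 1" "length u" iy] Ain ex1 lA unfolding dD D_def ox_def ex_def by simp
  have "offset R i3 < d" "d \<le> offset R i3 + rect_rows R i3" using d3 rows i3l by auto
  then have i3y: "i3 = iy" using block_unique din by blast
  have ixy: "ix \<le> iy"
  proof (rule ccontr)
    assume "\<not> ix \<le> iy"
    then have "offset R iy + rect_rows R iy \<le> offset R ix" using offset_lt[of iy ix R] by simp
    then show False using yin xl xy by simp
  qed
  have iyz: "iy \<le> iz"
  proof (rule ccontr)
    assume "\<not> iy \<le> iz"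
    then have "offset R iz + rect_rows R iz \<le> offset R iy" using offset_lt[of iz iy R] by simp
    then show False using yin zl yz ez1 unfolding ez_def by simp
  qed
  have ct: "(chi R ^^ 3) (u @ [y, x, z]) = chi R (chi R (chi R t))" unfolding chi3 t_def ..
  have ct': "(chi R ^^ 3) (u @ [y, z, x]) = chi R (chi R (chi R t'))" unfolding chi3 t'_def ..
  have lenD': "length D' = length u" unfolding D'_def using lenD by simp
  have Mxz: "Mx < Mz" using disj unfolding Mx_def Mz_def using ez1 by simp
  consider (Z) "iy = iz" | (X) "iy = ix" | (M) "ix < iy" "iy < iz" using ixy iyz by linarith
  then show ?thesis
  proof cases
    case Z
    have yz': "y = Suc oz" using yin zl yz unfolding Z oz_def by simp
    have uy: "u @ [y] = ins (length u) y u" using ins_end[of u y] by simp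
    have yinz: "oz < y" "y \<le> oz + ez" using yz' ez1 by auto
    have CXxu: "chainX ox ex u" using chainX_del[of ox ex "length u" y u] CXx uy neu_x[OF yinz] by simp
    have Bs: "B = chn ox u (ex - 1) @ [y]"
    proof -
      have "chn ox (ins (length u) y u) (ex - 1) = ins (length u) y (chn ox u (ex - 1))"
        using chn_ins[OF CXxu, of "length u" y "ex - 1"] neu_x[OF yinz] ex1 by simp
      moreover have "length (chn ox u (ex - 1)) = length u" using chainX.INV_len[OF CXxu, of "ex - 1"] ex1 by simp
      ultimately show ?thesis unfolding B_def using uy ins_end by metis
    qed
    have ay: "y = Suc oz \<or> y = Suc (Suc oz)" using yz' by simp
    have K: "chn oz ((oz + ez) # butlast (chn oz B (ez - 1))) (ez - 1) ! 0 = oz + ez"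
      using chainX.key[OF CXzB Bs ay yinz(2) ez1] yz' by simp
    have CY: "chainX oz ez ((oz + ez) # butlast (chn oz B (ez - 1)))"
      using chainX.Y_chainX[OF CXzB Bs ay ez1 yinz(2)] .
    have eY: "(oz + ez) # butlast (chn oz B (ez - 1)) = Mz # D'" unfolding comm D'_def Mz_def ..
    define F where "F = chn oz (Mz # D') (ez - 1)"
    have F0: "F ! 0 = Mz" using K unfolding eY F_def Mz_def by simp
    have CY': "chainX oz ez (Mz # D')" using CY eY by simp
    have lenF: "length F = Suc (length u)" using chainX.INV_len[OF CY', of "ez - 1"] ez1 lenD' unfolding F_def by simp
    obtain F' where Fs: "F = Mz # F'" using F0 lenF by (cases F) auto
    have e3: "offset R i3 = oz" "rect_rows R i3 = ez" using i3y Z unfolding oz_def ez_def by auto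
    have cc: "chi R (chi R (chi R t)) = Mz # Mx # Mz # F'"
    proof -
      have "chn oz (ins 0 Mx (Mz # D')) (ez - 1) = ins 0 Mx F"
        using chn_ins[OF CY', of 0 Mx "ez - 1"] neu_z[OF Mxin] ez1 unfolding F_def by simp
      then show ?thesis using c3 e3 Fs unfolding Mz_def by (simp add: ins_0)
    qed
    have cc': "chi R (chi R (chi R t')) = Mz # Mz # Mx # F'"
    proof -
      have "chn oz (ins 1 Mx (Mz # D')) (ez - 1) = ins 1 Mx F"
        using chn_ins[OF CY', of 1 Mx "ez - 1"] neu_z[OF Mxin] ez1 unfolding F_def by simp
      then show ?thesis using c3' e3 Fs unfolding Mz_def by (simp add: ins_def)
    qed
    have "knuth_step ([] @ [Mz, Mx, Mz] @ F') ([] @ [Mz, Mz, Mx] @ F')" using Mxz by (intro K1) auto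
    then show ?thesis unfolding ct ct' cc cc' using knuth_step_equiv by simp
  next
    case X
    have uy: "u @ [y] = ins (length u) y u" using ins_end[of u y] by simp
    have yinx: "ox < y" "y \<le> ox + ex" using yin unfolding X ox_def ex_def by auto
    have CXzu: "chainX oz ez u" using chainX_del[of oz ez "length u" y u] CXz uy neu_z[OF yinx] by simp
    have As: "A = chn oz u (ez - 1) @ [y]"
    proof -
      have "chn oz (ins (length u) y u) (ez - 1) = ins (length u) y (chn oz u (ez - 1))"
        using chn_ins[OF CXzu, of "length u" y "ez - 1"] neu_z[OF yinx] ez1 by simp
      moreover have "length (chn oz u (ez - 1)) = length u" using chainX.INV_len[OF CXzu, of "ez - 1"] ez1 by simp
      ultimately show ?thesis unfolding A_def using uy ins_end by metis
    qed
    have ay0: "y = Suc ox \<or> y = Suc (Suc ox)" using chainX.last_letter_block[OF CXxA As yinx] .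
    then have ay: "y = Suc (Suc ox)" using xy xl unfolding ox_def by auto
    have K: "chn ox ((ox + ex) # butlast (chn ox A (ex - 1))) (ex - 1) ! 0 = ox + ex - 1"
      using chainX.key[OF CXxA As ay0 yinx(2) ex1] ay by simp
    have CY: "chainX ox ex ((ox + ex) # butlast (chn ox A (ex - 1)))"
      using chainX.Y_chainX[OF CXxA As ay0 ex1 yinx(2)] .
    have eY: "(ox + ex) # butlast (chn ox A (ex - 1)) = Mx # D'" unfolding D_def D'_def Mx_def ..
    define G where "G = chn ox (Mx # D') (ex - 1)"
    have G0: "G ! 0 = Mx - 1" using K unfolding eY G_def Mx_def by simp
    have CY': "chainX ox ex (Mx # D')" using CY eY by simp
    have lenG: "length G = Suc (length u)" using chainX.INV_len[OF CY', of "ex - 1"] ex1 lenD' unfolding G_def by simp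
    obtain G' where Gs: "G = (Mx - 1) # G'" using G0 lenG by (cases G) auto
    have e3: "offset R i3 = ox" "rect_rows R i3 = ex" using i3y X unfolding ox_def ex_def by auto
    have cc: "chi R (chi R (chi R t)) = Mx # (Mx - 1) # Mz # G'"
    proof -
      have "chn ox (ins 1 Mz (Mx # D')) (ex - 1) = ins 1 Mz G"
        using chn_ins[OF CY', of 1 Mz "ex - 1"] neu_x[OF Mzin] ex1 unfolding G_def by simp
      then show ?thesis using c3 e3 Gs unfolding Mx_def by (simp add: ins_def)
    qed
    have cc': "chi R (chi R (chi R t')) = Mx # Mz # (Mx - 1) # G'"
    proof -
      have "chn ox (ins 0 Mz (Mx # D')) (ex - 1) = ins 0 Mz G"
        using chn_ins[OF CY', of 0 Mz "ex - 1"] neu_x[OF Mzin] ex1 unfolding G_def by simp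
      then show ?thesis using c3' e3 Gs unfolding Mx_def by (simp add: ins_0)
    qed
    have Mx1: "1 \<le> Mx" unfolding Mx_def using ex1 by simp
    have "knuth_step ([] @ [Mx, Mx - 1, Mz] @ G') ([] @ [Mx, Mz, Mx - 1] @ G')" using Mxz Mx1 by (intro K1) auto
    then show ?thesis unfolding ct ct' cc cc' using knuth_step_equiv by simp
  next
    case M
    define o3 where "o3 = offset R iy"
    define e3 where "e3 = rect_rows R iy"
    define M3 where "M3 = o3 + e3"
    have e31: "1 \<le> e3" using rows iyl unfolding e3_def by simp
    have CX3: "chainX o3 e3 (Mx # Mz # D')" using M3 i3y unfolding MR_def o3_def e3_def by simp
    have nyx: "iy \<noteq> ix" "iy \<noteq> iz" using M by auto
    have nMx: "\<And>j. 1 \<le> j \<Longrightarrow> j < e3 \<Longrightarrow> dl (o3 + j) Mx = 0"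
      using neutral_block[OF nyx(1), of R Mx] Mxin unfolding o3_def e3_def ox_def ex_def by auto
    have nMz: "\<And>j. 1 \<le> j \<Longrightarrow> j < e3 \<Longrightarrow> dl (o3 + j) Mz = 0"
      using neutral_block[OF nyx(2), of R Mz] Mzin unfolding o3_def e3_def oz_def ez_def by auto
    have CX3a: "chainX o3 e3 (Mz # D')" using chainX_del[of o3 e3 0 Mx "Mz # D'"] CX3 nMx by (simp add: ins_0)
    have CX3b: "chainX o3 e3 D'" using chainX_del[of o3 e3 0 Mz D'] CX3a nMz by (simp add: ins_0)
    define E where "E = chn o3 D' (e3 - 1)"
    have cMz: "chn o3 (Mz # D') (e3 - 1) = Mz # E"
      using chn_ins[OF CX3b, of 0 Mz "e3 - 1"] nMz e31 unfolding E_def by (simp add: ins_0)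
    have cMx: "chn o3 (Mx # D') (e3 - 1) = Mx # E"
      using chn_ins[OF CX3b, of 0 Mx "e3 - 1"] nMx e31 unfolding E_def by (simp add: ins_0)
    have CX3c: "chainX o3 e3 (Mx # D')" using chainX_ins[OF CX3b, of 0 Mx] nMx by (simp add: ins_0)
    have cc: "chn o3 (Mx # Mz # D') (e3 - 1) = Mx # Mz # E"
      using chn_ins[OF CX3a, of 0 Mx "e3 - 1"] nMx e31 cMz by (simp add: ins_0)
    have cc': "chn o3 (Mz # Mx # D') (e3 - 1) = Mz # Mx # E"
      using chn_ins[OF CX3c, of 0 Mz "e3 - 1"] nMz e31 cMx by (simp add: ins_0)
    have c3a: "chi R (chi R (chi R t)) = M3 # Mx # Mz # E" using c3 cc i3y unfolding M3_def o3_def e3_def by simp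
    have c3a': "chi R (chi R (chi R t')) = M3 # Mz # Mx # E" using c3' cc' i3y unfolding M3_def o3_def e3_def by simp
    have b1: "Mx < M3"
      using offset_lt[OF M(1), of R] e31 unfolding Mx_def ox_def ex_def M3_def o3_def by simp
    have b2: "M3 \<le> Mz"
      using offset_lt[OF M(2), of R] unfolding Mz_def oz_def M3_def o3_def e3_def by simp
    have "knuth_step ([] @ [M3, Mx, Mz] @ E) ([] @ [M3, Mz, Mx] @ E)" using b1 b2 by (intro K1) auto
    then show ?thesis unfolding ct ct' c3a c3a' using knuth_step_equiv by simp
  qed
qed

end
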